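(* Let $(\mathfrak g,\mu,P)$ be a Nijenhuis Lie algebra and $(M,P_M)$ a Nijenhuis representation over it. Then $(\mathrm C^\bullet_{\mathrm{NjO}}(\mathfrak g,M),\delta_{\mathrm{NjO},M})$ is a cochain complex, i.e. $\delta_{\mathrm{NjO},M}\circ\delta_{\mathrm{NjO},M}=0$.
   Context: All vector spaces are over a field $\mathbf k$ of characteristic $0$. A Nijenhuis Lie algebra is a Lie algebra $(\mathfrak g,\mu=[-,-]_\mu)$ with a linear $P:\mathfrak g\to\mathfrak g$ satisfying $[P a,P b]_\mu=P([Pa,b]_\mu+[a,Pb]_\mu-P[a,b]_\mu)$. A Nijenhuis representation is a Lie algebra representation $M$ of $(\mathfrak g,\mu)$ (action $a x$) with linear $P_M:M\to M$ such that $P(a)P_M(x)=P_M(P(a)x+aP_M(x)-P_M(ax))$. For a Lie algebra $(\mathfrak g,\mu)$ and representation $M$, the Chevalley–Eilenberg complex is $\mathrm C^n_{\mathrm{Lie}}(\mathfrak g,M)=\mathrm{Hom}(\wedge^n\mathfrak g,M)$, $n\ge0$, with $\delta_{\mathrm{Lie},M}(f)(a_1,\dots,a_{n+1})=\sum_{i=1}^{n+1}(-1)^{i-1}a_i f(a_1,\dots,\widehat{a_i},\dots,a_{n+1})+\sum_{i<j}(-1)^{i+j}f([a_i,a_j]_\mu,a_1,\dots,\widehat{a_i},\dots,\widehat{a_j},\dots,a_{n+1})$. Put $[a,b]_P:=[Pa,b]_\mu+[a,Pb]_\mu-P[a,b]_\mu$ and let $\mathfrak g$ act on $M$ by $a\rhd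 x:=P(a)x$. Let $\partial:\mathrm{Hom}(\wedge^n\mathfrak g,M)\to\mathrm{Hom}(\wedge^{n+1}\mathfrak g,M)$ be the Chevalley–Eilenberg differential of the bracket $[-,-]_P$ with coefficients in $M$ with action $\rhd$: $\partial(f)(a_1,\dots,a_{n+1})=\sum_{i}(-1)^{i-1}P(a_i)f(a_1,\dots,\widehat{a_i},\dots,a_{n+1})+\sum_{i<j}(-1)^{i+j}f([a_i,a_j]_P,a_1,\dots,\widehat{a_i},\dots,\widehat{a_j},\dots,a_{n+1})$. Define $\mathrm C^n_{\mathrm{NjO}}(\mathfrak g,M):=\mathrm{Hom}(\wedge^n\mathfrak g,M)$ for $n\ge0$ and $\delta_{\mathrm{NjO},M}(f):=-P_M\circ\delta_{\mathrm{Lie},M}(f)+\partial(f)$. *)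

theory Defs
  imports Complex_Main
begin

definition bilinear_map ::
  "('k::field \<Rightarrow> 'a::ab_group_add \<Rightarrow> 'a) \<Rightarrow> ('k \<Rightarrow> 'b::ab_group_add \<Rightarrow> 'b)
   \<Rightarrow> ('k \<Rightarrow> 'c::ab_group_add \<Rightarrow> 'c) \<Rightarrow> ('a \<Rightarrow> 'b \<Rightarrow> 'c) \<Rightarrow> bool" where
  "bilinear_map sa sb sc f \<longleftrightarrow>
     (\<forall>b. Vector_Spaces.linear sa sc (\<lambda>a. f a b)) \<and> (\<forall>a. Vector_Spaces.linear sb sc (\<lambda>b. f a b))"

definition lie_algebra ::
  "('k::field \<Rightarrow> 'g::ab_group_add \<Rightarrow> 'g) \<Rightarrow> ('g \<Rightarrow> 'g \<Rightarrow> 'g) \<Rightarrow> bool" where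
  "lie_algebra sg br \<longleftrightarrow> vector_space sg \<and> bilinear_map sg sg sg br \<and>
     (\<forall>a. br a a = 0) \<and>
     (\<forall>a b c. br a (br b c) + br b (br c a) + br c (br a b) = 0)"

definition lie_rep ::
  "('k::field \<Rightarrow> 'g::ab_group_add \<Rightarrow> 'g) \<Rightarrow> ('g \<Rightarrow> 'g \<Rightarrow> 'g)
   \<Rightarrow> ('k \<Rightarrow> 'm::ab_group_add \<Rightarrow> 'm) \<Rightarrow> ('g \<Rightarrow> 'm \<Rightarrow> 'm) \<Rightarrow> bool" where
  "lie_rep sg br sm act \<longleftrightarrow> lie_algebra sg br \<and> vector_space sm \<and>
     bilinear_map sg sm sm act \<and>
     (\<forall>a b x. act (br a b) x = act a (act b x) - act b (act a x))"

definition nij_bracket :: "('g::ab_group_add \<Rightarrow> 'g \<Rightarrow> 'g) \<Rightarrow> ('g \<Rightarrow> 'g) \<Rightarrow> 'g \<Rightarrow> 'g \<Rightarrow> 'g" where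
  "nij_bracket br P a b = br (P a) b + br a (P b) - P (br a b)"

definition nijenhuis_lie_algebra ::
  "('k::field \<Rightarrow> 'g::ab_group_add \<Rightarrow> 'g) \<Rightarrow> ('g \<Rightarrow> 'g \<Rightarrow> 'g) \<Rightarrow> ('g \<Rightarrow> 'g) \<Rightarrow> bool" where
  "nijenhuis_lie_algebra sg br P \<longleftrightarrow> lie_algebra sg br \<and> Vector_Spaces.linear sg sg P \<and>
     (\<forall>a b. br (P a) (P b) = P (nij_bracket br P a b))"

definition nijenhuis_rep ::
  "('k::field \<Rightarrow> 'g::ab_group_add \<Rightarrow> 'g) \<Rightarrow> ('g \<Rightarrow> 'g \<Rightarrow> 'g) \<Rightarrow> ('g \<Rightarrow> 'g)
   \<Rightarrow> ('k \<Rightarrow> 'm::ab_group_add \<Rightarrow> 'm) \<Rightarrow> ('g \<Rightarrow> 'm \<Rightarrow> 'm) \<Rightarrow> ('m \<Rightarrow> 'm) \<Rightarrow> bool" where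
  "nijenhuis_rep sg br P sm act PM \<longleftrightarrow> nijenhuis_lie_algebra sg br P \<and> lie_rep sg br sm act \<and>
     Vector_Spaces.linear sm sm PM \<and>
     (\<forall>a x. act (P a) (PM x) = PM (act (P a) x + act a (PM x) - PM (act a x)))"

text \<open>Cochains: Hom(\<wedge>^n g, M) realised as alternating multilinear maps on
lists of length n (values on lists of other lengths are irrelevant).\<close>
definition cochain ::
  "('k::field \<Rightarrow> 'g::ab_group_add \<Rightarrow> 'g) \<Rightarrow> ('k \<Rightarrow> 'm::ab_group_add \<Rightarrow> 'm)
   \<Rightarrow> nat \<Rightarrow> ('g list \<Rightarrow> 'm) \<Rightarrow> bool" where
  "cochain sg sm n f \<longleftrightarrow>
     (\<forall>as. length as = n \<longrightarrow> (\<forall>i<n. Vector_Spaces.linear sg sm (\<lambda>x. f (as[i := x])))) \<and>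
     (\<forall>as. length as = n \<longrightarrow> (\<forall>i j. i < j \<and> j < n \<and> as ! i = as ! j \<longrightarrow> f as = 0))"

definition del_at :: "nat \<Rightarrow> 'a list \<Rightarrow> 'a list" where
  "del_at i xs = take i xs @ drop (Suc i) xs"

text \<open>Chevalley--Eilenberg differential of a bracket br with coefficients in a
module with action act (indices 0-based, so (-1)^(i-1) becomes (-1)^i and
(-1)^(i+j) stays (-1)^(i+j)).\<close>
definition ce_diff ::
  "('k::field \<Rightarrow> 'm::ab_group_add \<Rightarrow> 'm) \<Rightarrow> ('g \<Rightarrow> 'g \<Rightarrow> 'g) \<Rightarrow> ('g \<Rightarrow> 'm \<Rightarrow> 'm)
   \<Rightarrow> ('g list \<Rightarrow> 'm) \<Rightarrow> 'g list \<Rightarrow> 'm" where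
  "ce_diff sm br act f as =
     (\<Sum>i<length as. sm ((-1) ^ i) (act (as ! i) (f (del_at i as)))) +
     (\<Sum>j<length as. \<Sum>i<j. sm ((-1) ^ (i + j))
         (f (br (as ! i) (as ! j) # del_at i (del_at j as))))"

definition njo_diff ::
  "('k::field \<Rightarrow> 'm::ab_group_add \<Rightarrow> 'm) \<Rightarrow> ('g::ab_group_add \<Rightarrow> 'g \<Rightarrow> 'g) \<Rightarrow> ('g \<Rightarrow> 'g)
   \<Rightarrow> ('g \<Rightarrow> 'm \<Rightarrow> 'm) \<Rightarrow> ('m \<Rightarrow> 'm) \<Rightarrow> ('g list \<Rightarrow> 'm) \<Rightarrow> 'g list \<Rightarrow> 'm" where
  "njo_diff sm br P act PM f as =
     ce_diff sm (nij_bracket br P) (\<lambda>a x. act (P a) x) f as - PM (ce_diff sm br act f as)"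

end

theory Submission
  imports Defs
begin

definition sgnp :: "nat \<Rightarrow> 'a::ab_group_add \<Rightarrow> 'a" where
  "sgnp e x = (if even e then x else - x)"

definition pos :: "nat set \<Rightarrow> nat \<Rightarrow> nat" where
  "pos S x = card {y\<in>S. y < x}"

definition LL :: "(nat \<Rightarrow> 'g) \<Rightarrow> nat set \<Rightarrow> 'g list" where
  "LL a S = map a (sorted_list_of_set S)"

lemma sl_strict: "sorted_wrt (<) (sorted_list_of_set (S::nat set))"
  by (rule strict_sorted_list_of_set)

lemma sl_less_iff:
  fixes S :: "nat set"
  assumes "i < card S" "k < card S" "finite S"
  shows "sorted_list_of_set S ! k < sorted_list_of_set S ! i \<longleftrightarrow> k < i"
proof -
  let ?xs = "sorted_list_of_set S"
  have s: "sorted_wrt (<) ?xs" by (rule sl_strict)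
  have l: "length ?xs = card S" by simp
  show ?thesis
  proof
    assume "?xs ! k < ?xs ! i"
    show "k < i"
    proof (rule ccontr)
      assume "\<not> k < i"
      then have "i < k \<or> i = k" by auto
      then show False
      proof
        assume "i < k" then have "?xs ! i < ?xs ! k" using s assms l by (simp add: sorted_wrt_iff_nth_less)
        with \<open>?xs ! k < ?xs ! i\<close> show False by simp
      next
        assume "i = k" with \<open>?xs ! k < ?xs ! i\<close> show False by simp
      qed
    qed
  next
    assume "k < i" then show "?xs ! k < ?xs ! i" using s assms l by (simp add: sorted_wrt_iff_nth_less)
  qed
qed

lemma pos_nth:
  fixes S :: "nat set"
  assumes "finite S" "i < card S"
  shows "pos S (sorted_list_of_set S ! i) = i"
proof -
  let ?xs = "sorted_list_of_set S"
  have l: "length ?xs = card S" by simp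
  have d: "distinct ?xs" by simp
  have "{y\<in>S. y < ?xs ! i} = (\<lambda>k. ?xs ! k) ` {..<i}"
  proof
    show "{y\<in>S. y < ?xs ! i} \<subseteq> (\<lambda>k. ?xs ! k) ` {..<i}"
    proof
      fix y assume "y \<in> {y\<in>S. y < ?xs ! i}"
      then have "y \<in> set ?xs" "y < ?xs ! i" using assms by auto
      then obtain k where k: "k < card S" "y = ?xs ! k" using l by (metis in_set_conv_nth)
      then have "k < i" using sl_less_iff[OF assms(2) k(1) assms(1)] \<open>y < ?xs ! i\<close> by simp
      then show "y \<in> (\<lambda>k. ?xs ! k) ` {..<i}" using k by auto
    qed
  next
    show "(\<lambda>k. ?xs ! k) ` {..<i} \<subseteq> {y\<in>S. y < ?xs ! i}"
    proof
      fix y assume "y \<in> (\<lambda>k. ?xs ! k) ` {..<i}"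
      then obtain k where k: "k < i" "y = ?xs ! k" by auto
      then have "k < card S" using assms by simp
      then have "y \<in> S" using k l assms by (metis nth_mem set_sorted_list_of_set)
      moreover have "y < ?xs ! i" using sl_less_iff[OF assms(2) \<open>k < card S\<close> assms(1)] k by simp
      ultimately show "y \<in> {y\<in>S. y < ?xs ! i}" by simp
    qed
  qed
  moreover have "inj_on (\<lambda>k. ?xs ! k) {..<i}"
    using d assms l by (auto simp: inj_on_def nth_eq_iff_index_eq)
  ultimately show ?thesis unfolding pos_def by (simp add: card_image)
qed

lemma nth_pos:
  fixes S :: "nat set"
  assumes "finite S" "x \<in> S"
  shows "pos S x < card S \<and> sorted_list_of_set S ! (pos S x) = x"
proof -
  let ?xs = "sorted_list_of_set S"
  obtain i where i: "i < card S" "?xs ! i = x" using assms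
    by (metis in_set_conv_nth length_sorted_list_of_set set_sorted_list_of_set)
  then show ?thesis using pos_nth[OF assms(1) i(1)] by simp
qed

lemma del_at_set:
  assumes "distinct xs" "i < length xs"
  shows "set (del_at i xs) = set xs - {xs ! i}" "distinct (del_at i xs)"
proof -
  have e: "xs = take i xs @ xs!i # drop (Suc i) xs" using assms(2) by (rule id_take_nth_drop)
  then have "distinct (take i xs @ xs!i # drop (Suc i) xs)" using assms(1) by simp
  then have "xs!i \<notin> set (take i xs)" "xs!i \<notin> set (drop (Suc i) xs)" "distinct (take i xs @ drop (Suc i) xs)"
    by auto
  moreover have "set xs = set (take i xs) \<union> {xs!i} \<union> set (drop (Suc i) xs)"
    by (subst e) auto
  ultimately show "set (del_at i xs) = set xs - {xs ! i}" "distinct (del_at i xs)"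
    unfolding del_at_def by auto
qed

lemma del_at_sorted:
  assumes "sorted (xs::nat list)"
  shows "sorted (del_at i xs)"
proof -
  have "sorted (take (Suc i) xs @ drop (Suc i) xs)" using assms by simp
  then have a: "sorted (take (Suc i) xs)" "sorted (drop (Suc i) xs)"
    "\<forall>x\<in>set (take (Suc i) xs). \<forall>y\<in>set (drop (Suc i) xs). x \<le> y"
    unfolding sorted_append by auto
  have "set (take i xs) \<subseteq> set (take (Suc i) xs)" by (rule set_take_subset_set_take) simp
  moreover have "sorted (take i xs)" using assms by (simp add: sorted_wrt_take)
  ultimately show ?thesis unfolding del_at_def sorted_append using a by blast
qed

lemma del_at_sl:
  fixes S :: "nat set"
  assumes "finite S" "i < card S"
  shows "del_at i (sorted_list_of_set S) = sorted_list_of_set (S - {sorted_list_of_set S ! i})"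
proof -
  let ?xs = "sorted_list_of_set S"
  have d: "distinct ?xs" by simp
  have l: "length ?xs = card S" by simp
  show ?thesis
  proof (rule sorted_distinct_set_unique)
    show "sorted (del_at i ?xs)" by (rule del_at_sorted) simp
    show "distinct (del_at i ?xs)" using del_at_set[OF d] assms l by simp
    show "set (del_at i ?xs) = set (sorted_list_of_set (S - {?xs ! i}))"
      using del_at_set[OF d] assms l by simp
    show "sorted (sorted_list_of_set (S - {?xs ! i}))" by simp
    show "distinct (sorted_list_of_set (S - {?xs ! i}))" by simp
  qed
qed

lemma length_del_at: "i < length xs \<Longrightarrow> length (del_at i xs) = length xs - 1"
  unfolding del_at_def by simp

lemma nth_del_at:
  assumes "i < length xs" "m < length xs - 1"
  shows "del_at i xs ! m = (if m < i then xs ! m else xs ! Suc m)"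
  using assms unfolding del_at_def by (auto simp: nth_append min_def)

lemma del_at_del_at:
  assumes "k < l" "l < length xs"
  shows "del_at k (del_at l xs) = del_at (l - 1) (del_at k xs)"
proof (rule nth_equalityI)
  show "length (del_at k (del_at l xs)) = length (del_at (l - 1) (del_at k xs))"
    using assms by (simp add: length_del_at)
next
  fix m assume "m < length (del_at k (del_at l xs))"
  then have m: "m < length xs - 2" using assms by (simp add: length_del_at)
  show "del_at k (del_at l xs) ! m = del_at (l - 1) (del_at k xs) ! m"
    using assms m by (auto simp add: nth_del_at length_del_at)
qed

lemma pos_rem:
  fixes S :: "nat set"
  assumes "finite S" "x \<in> S" "y \<noteq> x"
  shows "pos (S - {x}) y + (if x < y then 1 else 0) = pos S y"
proof -
  have e: "{z\<in>S - {x}. z < y} = {z\<in>S. z < y} - {x}" by auto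
  show ?thesis
  proof (cases "x < y")
    case True
    then have "x \<in> {z\<in>S. z < y}" using assms by simp
    moreover have "finite {z\<in>S. z < y}" using assms by simp
    ultimately have "card ({z\<in>S. z < y} - {x}) + 1 = card {z\<in>S. z < y}"
      by (metis One_nat_def Suc_pred card_Diff_singleton card_gt_0_iff empty_iff add.commute plus_1_eq_Suc)
    then show ?thesis using True unfolding pos_def e by simp
  next
    case False
    then have "{z\<in>S. z < y} - {x} = {z\<in>S. z < y}" by auto
    then show ?thesis using False unfolding pos_def e by simp
  qed
qed

definition dd :: "('g \<Rightarrow> 'g \<Rightarrow> 'g) \<Rightarrow> ('g \<Rightarrow> 'm \<Rightarrow> 'm) \<Rightarrow> ('g list \<Rightarrow> 'm::ab_group_add) \<Rightarrow> 'g list \<Rightarrow> 'm" where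
  "dd B A G xs = (\<Sum>i<length xs. sgnp i (A (xs ! i) (G (del_at i xs)))) +
     (\<Sum>j<length xs. \<Sum>i<j. sgnp (i + j) (G (B (xs ! i) (xs ! j) # del_at i (del_at j xs))))"

lemma sm_sign:
  assumes "vector_space sm"
  shows "sm ((-1) ^ i) x = sgnp i x"
proof -
  interpret vector_space sm by fact
  show ?thesis unfolding sgnp_def by (cases "even i") auto
qed

lemma ce_diff_dd:
  assumes "vector_space sm"
  shows "ce_diff sm B A G xs = dd B A G xs"
  unfolding ce_diff_def dd_def sm_sign[OF assms] ..

lemma del_at_map: "del_at i (map a xs) = map a (del_at i xs)"
  unfolding del_at_def by (simp add: take_map drop_map)

lemma LL_len: "finite T \<Longrightarrow> length (LL a T) = card T"
  unfolding LL_def by simp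

lemma LL_nth_pos: "finite T \<Longrightarrow> z \<in> T \<Longrightarrow> LL a T ! pos T z = a z"
  unfolding LL_def using nth_pos by (simp add: nth_pos)

lemma LL_del_pos: "finite T \<Longrightarrow> z \<in> T \<Longrightarrow> del_at (pos T z) (LL a T) = LL a (T - {z})"
  unfolding LL_def del_at_map using nth_pos del_at_sl by metis

lemma RI1:
  assumes "finite T"
  shows "(\<Sum>k<length (LL a T). h k (LL a T ! k) (del_at k (LL a T))) =
         (\<Sum>z\<in>T. h (pos T z) (a z) (LL a (T - {z})))"
proof (rule sum.reindex_bij_witness[where i = "pos T" and j = "\<lambda>k. sorted_list_of_set T ! k"])
  fix k assume "k \<in> {..<length (LL a T)}"
  then have k: "k < card T" using assms by (simp add: LL_len)
  show pk: "pos T (sorted_list_of_set T ! k) = k" using pos_nth[OF assms k] .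
  show zT: "sorted_list_of_set T ! k \<in> T" using k assms
    by (metis length_sorted_list_of_set nth_mem set_sorted_list_of_set)
  show "h (pos T (sorted_list_of_set T ! k)) (a (sorted_list_of_set T ! k)) (LL a (T - {sorted_list_of_set T ! k})) =
     h k (LL a T ! k) (del_at k (LL a T))"
    using LL_nth_pos[OF assms zT, of a] LL_del_pos[OF assms zT, of a] pk by simp
next
  fix z assume z: "z \<in> T"
  show "sorted_list_of_set T ! pos T z = z" using nth_pos[OF assms z] by simp
  show "pos T z \<in> {..<length (LL a T)}" using nth_pos[OF assms z] assms by (simp add: LL_len)
qed

lemma RI1p:
  assumes "finite T" "m \<le> card T"
  shows "(\<Sum>k<m. h k (LL a T ! k) (del_at k (LL a T))) =
         (\<Sum>z\<in>{z\<in>T. pos T z < m}. h (pos T z) (a z) (LL a (T - {z})))"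
proof (rule sum.reindex_bij_witness[where i = "pos T" and j = "\<lambda>k. sorted_list_of_set T ! k"])
  fix k assume "k \<in> {..<m}"
  then have km: "k < m" by simp
  then have k: "k < card T" using assms by simp
  show pk: "pos T (sorted_list_of_set T ! k) = k" using pos_nth[OF assms(1) k] .
  have zT: "sorted_list_of_set T ! k \<in> T" using k assms
    by (metis length_sorted_list_of_set nth_mem set_sorted_list_of_set)
  show "sorted_list_of_set T ! k \<in> {z\<in>T. pos T z < m}" using zT pk km by simp
  show "h (pos T (sorted_list_of_set T ! k)) (a (sorted_list_of_set T ! k)) (LL a (T - {sorted_list_of_set T ! k})) =
     h k (LL a T ! k) (del_at k (LL a T))"
    using LL_nth_pos[OF assms(1) zT, of a] LL_del_pos[OF assms(1) zT, of a] pk by simp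
next
  fix z assume z: "z \<in> {z\<in>T. pos T z < m}"
  show "sorted_list_of_set T ! pos T z = z" using nth_pos[OF assms(1)] z by simp
  show "pos T z \<in> {..<m}" using z by simp
qed

lemma pos_strict_mono:
  fixes T :: "nat set"
  assumes "finite T" "z \<in> T" "z < w"
  shows "pos T z < pos T w"
proof -
  have "{y\<in>T. y < z} \<subset> {y\<in>T. y < w}" using assms by auto
  moreover have "finite {y\<in>T. y < w}" using assms by simp
  ultimately show ?thesis unfolding pos_def by (simp add: psubset_card_mono)
qed

lemma RI2:
  assumes "finite T"
  shows "(\<Sum>l<length (LL a T). \<Sum>k<l. h k l (LL a T ! k) (LL a T ! l) (del_at k (del_at l (LL a T)))) =
    (\<Sum>w\<in>T. \<Sum>z\<in>T. if z < w then h (pos T z) (pos T w) (a z) (a w) (LL a (T - {w} - {z})) else 0)"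
proof -
  define g where "g l c ys = (\<Sum>k<l. h k l (ys ! k) c (del_at k ys))" for l c ys
  have "(\<Sum>l<length (LL a T). \<Sum>k<l. h k l (LL a T ! k) (LL a T ! l) (del_at k (del_at l (LL a T)))) =
        (\<Sum>l<length (LL a T). g l (LL a T ! l) (del_at l (LL a T)))"
  proof (rule sum.cong[OF refl])
    fix l assume "l \<in> {..<length (LL a T)}"
    then have l: "l < length (LL a T)" by simp
    show "(\<Sum>k<l. h k l (LL a T ! k) (LL a T ! l) (del_at k (del_at l (LL a T)))) = g l (LL a T ! l) (del_at l (LL a T))"
      unfolding g_def
    proof (rule sum.cong[OF refl])
      fix k assume "k \<in> {..<l}"
      then have "k < l" by simp
      then have "del_at l (LL a T) ! k = LL a T ! k" using l
        by (simp add: nth_del_at)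
      then show "h k l (LL a T ! k) (LL a T ! l) (del_at k (del_at l (LL a T))) =
         h k l (del_at l (LL a T) ! k) (LL a T ! l) (del_at k (del_at l (LL a T)))" by simp
    qed
  qed
  also have "\<dots> = (\<Sum>w\<in>T. g (pos T w) (a w) (LL a (T - {w})))"
    by (rule RI1[OF assms])
  also have "\<dots> = (\<Sum>w\<in>T. \<Sum>z\<in>T. if z < w then h (pos T z) (pos T w) (a z) (a w) (LL a (T - {w} - {z})) else 0)"
  proof (rule sum.cong[OF refl])
    fix w assume w: "w \<in> T"
    let ?T = "T - {w}"
    have fT: "finite ?T" using assms by simp
    have m: "pos T w \<le> card ?T"
    proof -
      have "{y\<in>T. y < w} \<subseteq> ?T" by auto
      then show ?thesis unfolding pos_def using fT by (simp add: card_mono)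
    qed
    have "g (pos T w) (a w) (LL a ?T) =
      (\<Sum>z\<in>{z\<in>?T. pos ?T z < pos T w}. h (pos ?T z) (pos T w) (a z) (a w) (LL a (?T - {z})))"
      unfolding g_def by (rule RI1p[OF fT m])
    also have "{z\<in>?T. pos ?T z < pos T w} = {z\<in>T. z < w}"
    proof (rule set_eqI, rule iffI)
      fix z assume z: "z \<in> {z\<in>?T. pos ?T z < pos T w}"
      then have zT: "z \<in> T" "z \<noteq> w" by auto
      have pr: "pos ?T z + (if w < z then 1 else 0) = pos T z" using pos_rem[OF assms w, of z] zT by simp
      show "z \<in> {z\<in>T. z < w}"
      proof (rule ccontr)
        assume "z \<notin> {z\<in>T. z < w}"
        then have "w < z" using zT by auto
        then have "pos T w < pos T z" using pos_strict_mono[OF assms w] by simp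
        then show False using pr z \<open>w < z\<close> by simp
      qed
    next
      fix z assume z: "z \<in> {z\<in>T. z < w}"
      then have zT: "z \<in> T" "z \<noteq> w" "z < w" by auto
      have pr: "pos ?T z + (if w < z then 1 else 0) = pos T z" using pos_rem[OF assms w, of z] zT by simp
      show "z \<in> {z\<in>?T. pos ?T z < pos T w}" using pr zT pos_strict_mono[OF assms zT(1) zT(3)] by simp
    qed
    also have "(\<Sum>z\<in>{z\<in>T. z < w}. h (pos ?T z) (pos T w) (a z) (a w) (LL a (?T - {z}))) =
       (\<Sum>z\<in>{z\<in>T. z < w}. h (pos T z) (pos T w) (a z) (a w) (LL a (?T - {z})))"
    proof (rule sum.cong[OF refl])
      fix z assume "z \<in> {z\<in>T. z < w}"
      then have zT: "z \<in> T" "z \<noteq> w" "z < w" by auto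
      have "pos ?T z + (if w < z then 1 else 0) = pos T z" using pos_rem[OF assms w, of z] zT by simp
      then show "h (pos ?T z) (pos T w) (a z) (a w) (LL a (?T - {z})) = h (pos T z) (pos T w) (a z) (a w) (LL a (?T - {z}))"
        using zT by simp
    qed
    also have "\<dots> = (\<Sum>z\<in>T. if z < w then h (pos T z) (pos T w) (a z) (a w) (LL a (T - {w} - {z})) else 0)"
      using assms by (simp add: sum.inter_filter)
    finally show "g (pos T w) (a w) (LL a (T - {w})) =
       (\<Sum>z\<in>T. if z < w then h (pos T z) (pos T w) (a z) (a w) (LL a (T - {w} - {z})) else 0)" .
  qed
  finally show ?thesis .
qed

lemma sgnp_Suc[simp]: "sgnp (Suc e) x = - sgnp e x" unfolding sgnp_def by simp
lemma sgnp_0[simp]: "sgnp 0 x = x" unfolding sgnp_def by simp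
lemma sgnp_zero[simp]: "sgnp e 0 = 0" unfolding sgnp_def by simp
lemma sgnp_add: "sgnp e (x + y) = sgnp e x + sgnp e y" unfolding sgnp_def by simp
lemma sgnp_minus: "sgnp e (- x) = - sgnp e x" unfolding sgnp_def by simp
lemma sgnp_diff: "sgnp e (x - y) = sgnp e x - sgnp e y" unfolding sgnp_def by simp
lemma sgnp_sg: "sgnp e (sgnp f x) = sgnp (e + f) x" unfolding sgnp_def by simp
lemma sgnp_sum: "sgnp e (sum g I) = (\<Sum>i\<in>I. sgnp e (g i))"
  unfolding sgnp_def by (simp add: sum_negf)
lemma sgnp_cancel: "odd (e + f) \<Longrightarrow> sgnp e x + sgnp f x = 0" unfolding sgnp_def by auto
lemma sgnp_eq: "even (e + f) \<Longrightarrow> sgnp e x = sgnp f x" unfolding sgnp_def by auto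

lemma del_at_0_Cons[simp]: "del_at 0 (b # xs) = xs" unfolding del_at_def by simp
lemma del_at_Suc_Cons[simp]: "del_at (Suc i) (b # xs) = b # del_at i xs" unfolding del_at_def by simp

lemma D1:
  assumes "finite S"
  shows "dd B A G (LL a S) = (\<Sum>x\<in>S. sgnp (pos S x) (A (a x) (G (LL a (S - {x}))))) +
     (\<Sum>w\<in>S. \<Sum>z\<in>S. if z < w then sgnp (pos S z + pos S w) (G (B (a z) (a w) # LL a (S - {w} - {z}))) else 0)"
  unfolding dd_def
  using RI1[OF assms, of "\<lambda>k c ys. sgnp k (A c (G ys))" a]
    RI2[OF assms, of "\<lambda>k l c c' ys. sgnp (k + l) (G (B c c' # ys))" a]
  by simp

lemma dd_cons:
  "dd B A G (b # xs) = A b (G xs) + (\<Sum>k<length xs. sgnp (Suc k) (A (xs ! k) (G (b # del_at k xs)))) +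
     (\<Sum>k<length xs. sgnp (Suc k) (G (B b (xs ! k) # del_at k xs))) +
     (\<Sum>l<length xs. \<Sum>k<l. sgnp (k + l) (G (B (xs ! k) (xs ! l) # b # del_at k (del_at l xs))))"
proof -
  have 1: "(\<Sum>i<length (b # xs). sgnp i (A ((b # xs) ! i) (G (del_at i (b # xs))))) =
     A b (G xs) + (\<Sum>k<length xs. sgnp (Suc k) (A (xs ! k) (G (b # del_at k xs))))"
    by (simp only: length_Cons sum.lessThan_Suc_shift) (simp del: sum.lessThan_Suc)
  have 2: "(\<Sum>j<length (b # xs). \<Sum>i<j. sgnp (i + j) (G (B ((b # xs) ! i) ((b # xs) ! j) # del_at i (del_at j (b # xs))))) =
     (\<Sum>k<length xs. sgnp (Suc k) (G (B b (xs ! k) # del_at k xs))) +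
     (\<Sum>l<length xs. \<Sum>k<l. sgnp (k + l) (G (B (xs ! k) (xs ! l) # b # del_at k (del_at l xs))))"
    by (simp only: length_Cons sum.lessThan_Suc_shift) (simp del: sum.lessThan_Suc add: sum_subtractf sum_negf)
  show ?thesis unfolding dd_def 1 2 by (simp add: add.assoc)
qed

lemma D2:
  assumes "finite T"
  shows "dd B A G (b # LL a T) = A b (G (LL a T)) +
     (\<Sum>z\<in>T. sgnp (Suc (pos T z)) (A (a z) (G (b # LL a (T - {z}))))) +
     (\<Sum>z\<in>T. sgnp (Suc (pos T z)) (G (B b (a z) # LL a (T - {z})))) +
     (\<Sum>w\<in>T. \<Sum>z\<in>T. if z < w then sgnp (pos T z + pos T w) (G (B (a z) (a w) # b # LL a (T - {w} - {z}))) else 0)"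
  unfolding dd_cons
  using RI1[OF assms, of "\<lambda>k c ys. sgnp (Suc k) (A c (G (b # ys)))" a]
    RI1[OF assms, of "\<lambda>k c ys. sgnp (Suc k) (G (B b c # ys))" a]
    RI2[OF assms, of "\<lambda>k l c c' ys. sgnp (k + l) (G (B c c' # b # ys))" a]
  by simp

lemma sum2_zero:
  "(\<And>x y. x \<in> U \<Longrightarrow> y \<in> V \<Longrightarrow> f x y + g x y = 0) \<Longrightarrow>
   (\<Sum>x\<in>U. \<Sum>y\<in>V. f x y) + (\<Sum>x\<in>U. \<Sum>y\<in>V. g x y) = (0::'a::ab_group_add)"
  by (simp add: sum.distrib[symmetric])

lemma sum3_zero:
  "(\<And>x y z. x \<in> U \<Longrightarrow> y \<in> V \<Longrightarrow> z \<in> W \<Longrightarrow> f x y z + g x y z = 0) \<Longrightarrow>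
   (\<Sum>x\<in>U. \<Sum>y\<in>V. \<Sum>z\<in>W. f x y z) + (\<Sum>x\<in>U. \<Sum>y\<in>V. \<Sum>z\<in>W. g x y z) = (0::'a::ab_group_add)"
  by (simp add: sum.distrib[symmetric])

lemma sum_diff1_if: "finite U \<Longrightarrow> sum g (U - {x}) = (\<Sum>y\<in>U. if y \<noteq> x then g y else 0)"
proof -
  assume "finite U"
  have "U - {x} = {y\<in>U. y \<noteq> x}" by auto
  then show ?thesis using \<open>finite U\<close> by (simp add: sum.inter_filter)
qed

lemma sum_diff2_if: "finite U \<Longrightarrow> sum g (U - {x} - {y}) = (\<Sum>z\<in>U. if z \<noteq> x \<and> z \<noteq> y then g z else 0)"
proof -
  assume "finite U"
  have "U - {x} - {y} = {z\<in>U. z \<noteq> x \<and> z \<noteq> y}" by auto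
  then show ?thesis using \<open>finite U\<close> by (simp add: sum.inter_filter)
qed

lemma hom_sum:
  fixes h :: "'a::ab_group_add \<Rightarrow> 'b::ab_group_add"
  assumes "\<And>u v. h (u + v) = h u + h v"
  shows "h (sum g I) = (\<Sum>i\<in>I. h (g i))"
proof -
  have h0: "h 0 = 0" using assms[of 0 0] by simp
  show ?thesis by (induction I rule: infinite_finite_induct) (auto simp: h0 assms)
qed

lemma hom_minus:
  fixes h :: "'a::ab_group_add \<Rightarrow> 'b::ab_group_add"
  assumes "\<And>u v. h (u + v) = h u + h v"
  shows "h (- u) = - h u"
proof -
  have h0: "h 0 = 0" using assms[of 0 0] by simp
  have "h (- u) + h u = 0" using assms[of "-u" u] h0 by simp
  then show ?thesis by (simp add: eq_neg_iff_add_eq_0)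
qed

locale GT =
  fixes B :: "'g::ab_group_add \<Rightarrow> 'g \<Rightarrow> 'g" and A :: "'g \<Rightarrow> 'm::ab_group_add \<Rightarrow> 'm"
    and F :: "'g list \<Rightarrow> 'm" and n :: nat
  assumes Badd1: "\<And>x y z. B (x + y) z = B x z + B y z"
    and Badd2: "\<And>x y z. B z (x + y) = B z x + B z y"
    and Balt: "\<And>x. B x x = 0"
    and Jac: "\<And>x y z. B x (B y z) + B y (B z x) + B z (B x y) = 0"
    and Aadd1: "\<And>x y m. A (x + y) m = A x m + A y m"
    and Aadd2: "\<And>x u v. A x (u + v) = A x u + A x v"
    and Arep: "\<And>x y m. A (B x y) m = A x (A y m) - A y (A x m)"
    and Fadd: "\<And>b c R. Suc (length R) = n \<Longrightarrow> F ((b + c) # R) = F (b # R) + F (c # R)"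
    and Fanti: "\<And>b c R. Suc (Suc (length R)) = n \<Longrightarrow> F (b # c # R) = - F (c # b # R)"
    and half: "\<And>x::'m. x + x = 0 \<Longrightarrow> x = 0"
begin

lemma A_sum: "A c (sum g I) = (\<Sum>i\<in>I. A c (g i))"
  by (rule hom_sum) (rule Aadd2)
lemma A_minus: "A c (- u) = - A c u"
  by (rule hom_minus) (rule Aadd2)
lemma A_sg: "A c (sgnp e u) = sgnp e (A c u)"
  unfolding sgnp_def by (simp add: A_minus)
lemma A_zero: "A c 0 = 0" using Aadd2[of c 0 0] by simp
lemma A_if: "A c (if P then u else 0) = (if P then A c u else 0)" by (simp add: A_zero)

lemma B_minus1: "B (- x) y = - B x y" by (rule hom_minus[where h = "\<lambda>x. B x y"]) (rule Badd1)
lemma B_anti: "B x y = - B y x"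
proof -
  have "B (x + y) (x + y) = B x x + B x y + (B y x + B y y)" by (simp add: Badd1 Badd2 add.assoc)
  then have "B x y + B y x = 0" by (simp add: Balt)
  then show ?thesis by (simp add: eq_neg_iff_add_eq_0)
qed
lemma Jac2: "B (B u v) w + B (B w u) v + B (B v w) u = 0"
proof -
  have "B (B u v) w + B (B w u) v + B (B v w) u = - (B w (B u v) + B u (B v w) + B v (B w u))"
    by (simp add: B_anti[of "B u v" w] B_anti[of "B w u" v] B_anti[of "B v w" u])
  also have "B w (B u v) + B u (B v w) + B v (B w u) = 0" using Jac[of u v w] by (simp add: algebra_simps)
  finally show ?thesis by simp
qed

lemma F_zero: "Suc (length R) = n \<Longrightarrow> F (0 # R) = 0"
  using Fadd[of R 0 0] by simp

lemma F_sum3: "Suc (length R) = n \<Longrightarrow> F (x # R) + F (y # R) + F (z # R) = F ((x + y + z) # R)"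
  by (simp add: Fadd)

definition "T1a a U = (\<Sum>x\<in>U. sgnp (pos U x) (A (a x) (\<Sum>y\<in>U-{x}. sgnp (pos (U-{x}) y) (A (a y) (F (LL a (U-{x}-{y})))))))"
definition "T1b a U = (\<Sum>x\<in>U. sgnp (pos U x) (A (a x) (\<Sum>w\<in>U-{x}. \<Sum>z\<in>U-{x}. if z < w then sgnp (pos (U-{x}) z + pos (U-{x}) w) (F (B (a z) (a w) # LL a (U-{x}-{w}-{z}))) else 0)))"
definition "T2a a U = (\<Sum>w\<in>U. \<Sum>z\<in>U. if z < w then sgnp (pos U z + pos U w) (A (B (a z) (a w)) (F (LL a (U-{w}-{z})))) else 0)"
definition "T2b a U = (\<Sum>w\<in>U. \<Sum>z\<in>U. if z < w then sgnp (pos U z + pos U w) (\<Sum>x\<in>U-{w}-{z}. sgnp (Suc (pos (U-{w}-{z}) x)) (A (a x) (F (B (a z) (a w) # LL a (U-{w}-{z}-{x}))))) else 0)"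
definition "T2c a U = (\<Sum>w\<in>U. \<Sum>z\<in>U. if z < w then sgnp (pos U z + pos U w) (\<Sum>x\<in>U-{w}-{z}. sgnp (Suc (pos (U-{w}-{z}) x)) (F (B (B (a z) (a w)) (a x) # LL a (U-{w}-{z}-{x})))) else 0)"
definition "T2d a U = (\<Sum>w\<in>U. \<Sum>z\<in>U. if z < w then sgnp (pos U z + pos U w) (\<Sum>v\<in>U-{w}-{z}. \<Sum>u\<in>U-{w}-{z}. if u < v then sgnp (pos (U-{w}-{z}) u + pos (U-{w}-{z}) v) (F (B (a u) (a v) # B (a z) (a w) # LL a (U-{w}-{z}-{v}-{u}))) else 0) else 0)"

lemma if_add0: "(if c then x + y else 0) = (if c then x else 0) + (if c then y else (0::'a::ab_group_add))"
  by simp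

lemma expand:
  assumes "finite U"
  shows "dd B A (dd B A F) (LL a U) = T1a a U + T1b a U + T2a a U + T2b a U + T2c a U + T2d a U"
proof -
  have fin: "finite (U - {x})" "finite (U - {x} - {y})" for x y using assms by auto
  show ?thesis
    unfolding T1a_def T1b_def T2a_def T2b_def T2c_def T2d_def
    apply (simp only: D1[OF assms] D1[OF fin(1)] D2[OF fin(2)])
    apply (simp only: Aadd2 sgnp_add if_add0 sum.distrib)
    apply (simp only: add.assoc)
    done
qed

end

lemma sgnp_if: "sgnp e (if c then u else 0) = (if c then sgnp e u else 0)" by simp

lemma if_neq_split: "(if (y::nat) \<noteq> x then f else 0) = (if x < y then f else 0) + (if y < x then f else (0::'a::ab_group_add))"
  by auto

context GT
begin

lemma partI:
  assumes fin: "finite U"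
  shows "T1a a U + T2a a U = 0"
proof -
  let ?K = "\<lambda>x y. A (a x) (A (a y) (F (LL a (U-{x}-{y}))))"
  have t1: "T1a a U = (\<Sum>x\<in>U. \<Sum>y\<in>U. if x < y then sgnp (pos U x + pos (U-{x}) y) (?K x y) else 0) +
     (\<Sum>x\<in>U. \<Sum>y\<in>U. if y < x then sgnp (pos U x + pos (U-{x}) y) (?K x y) else 0)"
    unfolding T1a_def
    by (simp only: sum_diff1_if[OF fin] if_neq_split sum.distrib Aadd2 sgnp_add A_sum A_if A_sg sgnp_sum sgnp_if sgnp_sg)
  have t2: "T2a a U = (\<Sum>w\<in>U. \<Sum>z\<in>U. if z < w then sgnp (pos U z + pos U w) (A (a z) (A (a w) (F (LL a (U-{w}-{z}))))) else 0)
      - (\<Sum>w\<in>U. \<Sum>z\<in>U. if z < w then sgnp (pos U z + pos U w) (A (a w) (A (a z) (F (LL a (U-{w}-{z}))))) else 0)"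
    unfolding T2a_def sum_subtractf[symmetric] by (intro sum.cong refl) (simp add: Arep sgnp_diff)
  have pa: "(\<Sum>x\<in>U. \<Sum>y\<in>U. if x < y then sgnp (pos U x + pos (U-{x}) y) (?K x y) else 0) +
     (\<Sum>w\<in>U. \<Sum>z\<in>U. if z < w then sgnp (pos U z + pos U w) (A (a z) (A (a w) (F (LL a (U-{w}-{z}))))) else 0) = 0"
  proof -
    have "(\<Sum>w\<in>U. \<Sum>z\<in>U. if z < w then sgnp (pos U z + pos U w) (A (a z) (A (a w) (F (LL a (U-{w}-{z}))))) else 0)
      = (\<Sum>x\<in>U. \<Sum>y\<in>U. if x < y then sgnp (pos U x + pos U y) (A (a x) (A (a y) (F (LL a (U-{y}-{x}))))) else 0)"
      by (rule sum.swap)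
    moreover have "(\<Sum>x\<in>U. \<Sum>y\<in>U. if x < y then sgnp (pos U x + pos (U-{x}) y) (?K x y) else 0) +
      (\<Sum>x\<in>U. \<Sum>y\<in>U. if x < y then sgnp (pos U x + pos U y) (A (a x) (A (a y) (F (LL a (U-{y}-{x}))))) else 0) = 0"
    proof (rule sum2_zero)
      fix x y assume xy: "x \<in> U" "y \<in> U"
      show "(if x < y then sgnp (pos U x + pos (U-{x}) y) (?K x y) else 0) +
        (if x < y then sgnp (pos U x + pos U y) (A (a x) (A (a y) (F (LL a (U-{y}-{x}))))) else 0) = 0"
      proof (cases "x < y")
        case True
        have "pos (U-{x}) y + 1 = pos U y" using pos_rem[OF fin xy(1), of y] True by simp
        then have o: "odd (pos U x + pos (U-{x}) y + (pos U x + pos U y))" by presburger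
        have "U-{y}-{x} = U-{x}-{y}" by blast
        then show ?thesis using True sgnp_cancel[OF o] by simp
      qed simp
    qed
    ultimately show ?thesis by simp
  qed
  have pb: "(\<Sum>x\<in>U. \<Sum>y\<in>U. if y < x then sgnp (pos U x + pos (U-{x}) y) (?K x y) else 0) =
      (\<Sum>w\<in>U. \<Sum>z\<in>U. if z < w then sgnp (pos U z + pos U w) (A (a w) (A (a z) (F (LL a (U-{w}-{z}))))) else 0)"
  proof (intro sum.cong refl)
    fix x y assume xy: "x \<in> U" "y \<in> U"
    show "(if y < x then sgnp (pos U x + pos (U-{x}) y) (?K x y) else 0) =
      (if y < x then sgnp (pos U y + pos U x) (A (a x) (A (a y) (F (LL a (U-{x}-{y}))))) else 0)"
    proof (cases "y < x")
      case True
      have "pos (U-{x}) y = pos U y" using pos_rem[OF fin xy(1), of y] True by simp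
      then show ?thesis by (simp add: add.commute)
    qed simp
  qed
  show ?thesis unfolding t1 t2 using pa pb by (simp add: algebra_simps)
qed

end

lemma if_sum0: "(if c then sum f I else 0) = (\<Sum>i\<in>I. if c then f i else (0::'a::ab_group_add))"
  by simp

lemma par3:
  fixes qz cxz pz qw cxw pw r czx px' cwx px :: nat
  shows "qz + cxz = pz \<Longrightarrow> qw + cxw = pw \<Longrightarrow> r + czx = px' \<Longrightarrow> px' + cwx = px \<Longrightarrow>
    cxz + czx = 1 \<Longrightarrow> cxw + cwx = 1 \<Longrightarrow> odd (px + (qz + qw) + (pz + pw + Suc r))"
  by presburger

lemma neq_ind: "(x::nat) \<noteq> y \<Longrightarrow> (if x < y then 1 else 0) + (if y < x then 1 else 0) = (1::nat)"
  by auto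

context GT
begin

lemma partII:
  assumes fin: "finite U"
  shows "T1b a U + T2b a U = 0"
proof -
  let ?G = "\<lambda>x w z. A (a x) (F (B (a z) (a w) # LL a (U-{x}-{w}-{z})))"
  let ?g1 = "\<lambda>x w z. if w \<noteq> x then if z \<noteq> x then if z < w then sgnp (pos U x + (pos (U-{x}) z + pos (U-{x}) w)) (?G x w z) else 0 else 0 else 0"
  let ?g2 = "\<lambda>x w z. if z < w then if x \<noteq> w \<and> x \<noteq> z then sgnp (pos U z + pos U w + Suc (pos (U-{w}-{z}) x)) (A (a x) (F (B (a z) (a w) # LL a (U-{w}-{z}-{x})))) else 0 else 0"
  have t1: "T1b a U = (\<Sum>x\<in>U. \<Sum>w\<in>U. \<Sum>z\<in>U. ?g1 x w z)"
    unfolding T1b_def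
    by (simp only: sum_diff1_if[OF fin] A_sum A_if A_sg sgnp_sum sgnp_if sgnp_sg if_sum0)
  also have "\<dots> = (\<Sum>w\<in>U. \<Sum>x\<in>U. \<Sum>z\<in>U. ?g1 x w z)" by (rule sum.swap)
  also have "\<dots> = (\<Sum>w\<in>U. \<Sum>z\<in>U. \<Sum>x\<in>U. ?g1 x w z)" by (intro sum.cong refl sum.swap)
  finally have t1': "T1b a U = (\<Sum>w\<in>U. \<Sum>z\<in>U. \<Sum>x\<in>U. ?g1 x w z)" .
  have t2: "T2b a U = (\<Sum>w\<in>U. \<Sum>z\<in>U. \<Sum>x\<in>U. ?g2 x w z)"
    unfolding T2b_def
    by (simp only: sum_diff2_if[OF fin] sgnp_sum sgnp_if sgnp_sg if_sum0)
  have "(\<Sum>w\<in>U. \<Sum>z\<in>U. \<Sum>x\<in>U. ?g1 x w z) + (\<Sum>w\<in>U. \<Sum>z\<in>U. \<Sum>x\<in>U. ?g2 x w z) = 0"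
  proof (rule sum3_zero)
    fix w z x assume m: "w \<in> U" "z \<in> U" "x \<in> U"
    show "?g1 x w z + ?g2 x w z = 0"
    proof (cases "w \<noteq> x \<and> z \<noteq> x \<and> z < w")
      case True
      then have ne: "x \<noteq> w" "x \<noteq> z" "z \<noteq> w" "z < w" by auto
      have f1: "pos (U-{x}) z + (if x < z then 1 else 0) = pos U z" using pos_rem[OF fin m(3), of z] ne by simp
      have f2: "pos (U-{x}) w + (if x < w then 1 else 0) = pos U w" using pos_rem[OF fin m(3), of w] ne by simp
      have f3: "pos (U-{w}-{z}) x + (if z < x then 1 else 0) = pos (U-{w}) x"
        using pos_rem[of "U-{w}" z x] fin m ne by simp
      have f4: "pos (U-{w}) x + (if w < x then 1 else 0) = pos U x" using pos_rem[OF fin m(1), of x] ne by simp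
      have o: "odd (pos U x + (pos (U-{x}) z + pos (U-{x}) w) + (pos U z + pos U w + Suc (pos (U-{w}-{z}) x)))"
        by (rule par3[OF f1 f2 f3 f4 neq_ind neq_ind]) (use ne in auto)
      have "U-{w}-{z}-{x} = U-{x}-{w}-{z}" by blast
      then show ?thesis using True ne sgnp_cancel[OF o] by simp
    qed auto
  qed
  then show ?thesis unfolding t1' t2 .
qed

end

lemma split3: "(if (z::nat) < w then if x \<noteq> w \<and> x \<noteq> z then f else 0 else 0) =
   (if x < z \<and> z < w then f else 0) + (if z < x \<and> x < w then f else 0) + (if z < w \<and> w < x then f else (0::'a::ab_group_add))"
  by auto

lemma card3: "finite U \<Longrightarrow> u \<in> U \<Longrightarrow> v \<in> U \<Longrightarrow> w \<in> U \<Longrightarrow> u \<noteq> v \<Longrightarrow> u \<noteq> w \<Longrightarrow> v \<noteq> w \<Longrightarrow>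
  card (U - {w} - {v} - {u}) + 3 = card U"
proof -
  assume a: "finite U" "u \<in> U" "v \<in> U" "w \<in> U" "u \<noteq> v" "u \<noteq> w" "v \<noteq> w"
  have "{u, v, w} \<subseteq> U" using a by auto
  then have "card {u, v, w} \<le> card U" using a(1) by (rule card_mono[rotated])
  moreover have "card {u, v, w} = 3" using a by simp
  moreover have "card (U - {w} - {v} - {u}) = card U - 1 - 1 - 1" using a by (simp add: card_Diff_singleton)
  ultimately show ?thesis by simp
qed

context GT
begin

lemma partIII:
  assumes fin: "finite U" and cU: "card U = Suc (Suc n)"
  shows "T2c a U = 0"
proof -
  let ?f = "\<lambda>w z x. sgnp (pos U z + pos U w + Suc (pos (U-{w}-{z}) x)) (F (B (B (a z) (a w)) (a x) # LL a (U-{w}-{z}-{x})))"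
  have t: "T2c a U = (\<Sum>w\<in>U. \<Sum>z\<in>U. \<Sum>x\<in>U. if x < z \<and> z < w then ?f w z x else 0) +
      (\<Sum>w\<in>U. \<Sum>z\<in>U. \<Sum>x\<in>U. if z < x \<and> x < w then ?f w z x else 0) +
      (\<Sum>w\<in>U. \<Sum>z\<in>U. \<Sum>x\<in>U. if z < w \<and> w < x then ?f w z x else 0)"
    unfolding T2c_def
    by (simp only: sum_diff2_if[OF fin] sgnp_sum sgnp_if sgnp_sg if_sum0 split3 sum.distrib)
  have s2: "(\<Sum>w\<in>U. \<Sum>z\<in>U. \<Sum>x\<in>U. if z < x \<and> x < w then ?f w z x else 0) =
      (\<Sum>w\<in>U. \<Sum>z\<in>U. \<Sum>x\<in>U. if x < z \<and> z < w then ?f w x z else 0)"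
    by (intro sum.cong refl sum.swap)
  have s3: "(\<Sum>w\<in>U. \<Sum>z\<in>U. \<Sum>x\<in>U. if z < w \<and> w < x then ?f w z x else 0) =
      (\<Sum>w\<in>U. \<Sum>z\<in>U. \<Sum>x\<in>U. if x < z \<and> z < w then ?f z x w else 0)"
  proof -
    have "(\<Sum>w\<in>U. \<Sum>z\<in>U. \<Sum>x\<in>U. if z < w \<and> w < x then ?f w z x else 0) =
      (\<Sum>w\<in>U. \<Sum>x\<in>U. \<Sum>z\<in>U. if z < w \<and> w < x then ?f w z x else 0)"
      by (intro sum.cong refl sum.swap)
    also have "\<dots> = (\<Sum>x\<in>U. \<Sum>w\<in>U. \<Sum>z\<in>U. if z < w \<and> w < x then ?f w z x else 0)"
      by (rule sum.swap)
    finally show ?thesis by simp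
  qed
  have z: "(\<Sum>w\<in>U. \<Sum>z\<in>U. \<Sum>x\<in>U. (if x < z \<and> z < w then ?f w z x else 0) +
      (if x < z \<and> z < w then ?f w x z else 0) + (if x < z \<and> z < w then ?f z x w else 0)) = 0"
  proof (intro sum.neutral ballI)
    fix w v u assume m: "w \<in> U" "v \<in> U" "u \<in> U"
    show "(if u < v \<and> v < w then ?f w v u else 0) + (if u < v \<and> v < w then ?f w u v else 0) +
        (if u < v \<and> v < w then ?f v u w else 0) = 0"
    proof (cases "u < v \<and> v < w")
      case True
      then have o: "u < v" "v < w" "u < w" by auto
      have r1: "pos (U-{w}-{v}) u = pos U u"
      proof -
        have "pos (U-{w}) u = pos U u" using pos_rem[OF fin m(1), of u] o by simp
        moreover have "pos (U-{w}-{v}) u = pos (U-{w}) u" using pos_rem[of "U-{w}" v u] fin m o by simp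
        ultimately show ?thesis by simp
      qed
      have r2: "pos (U-{w}-{u}) v + 1 = pos U v"
      proof -
        have "pos (U-{w}) v = pos U v" using pos_rem[OF fin m(1), of v] o by simp
        moreover have "pos (U-{w}-{u}) v + 1 = pos (U-{w}) v" using pos_rem[of "U-{w}" u v] fin m o by simp
        ultimately show ?thesis by simp
      qed
      have r3: "pos (U-{v}-{u}) w + 2 = pos U w"
      proof -
        have "pos (U-{v}) w + 1 = pos U w" using pos_rem[OF fin m(2), of w] o by simp
        moreover have "pos (U-{v}-{u}) w + 1 = pos (U-{v}) w" using pos_rem[of "U-{v}" u w] fin m o by simp
        ultimately show ?thesis by simp
      qed
      let ?R = "LL a (U-{w}-{v}-{u})"
      have e1: "U-{w}-{u}-{v} = U-{w}-{v}-{u}" "U-{v}-{u}-{w} = U-{w}-{v}-{u}" by blast+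
      have len: "Suc (length ?R) = n"
        using card3[OF fin m(3) m(2) m(1)] o cU LL_len[of "U-{w}-{v}-{u}" a] fin by simp
      let ?E = "pos U u + pos U v + pos U w + 1"
      have p1: "?f w v u = sgnp ?E (F (B (B (a v) (a w)) (a u) # ?R))"
        by (rule arg_cong2[where f = sgnp, OF _ refl]) (use r1 in simp)
      have p2: "?f w u v = - sgnp ?E (F (B (B (a u) (a w)) (a v) # ?R))"
      proof -
        have "even (pos U u + pos U w + Suc (pos (U-{w}-{u}) v) + Suc ?E)" using r2 by presburger
        then have "?f w u v = sgnp (Suc ?E) (F (B (B (a u) (a w)) (a v) # ?R))"
          using e1 by (simp only: sgnp_eq)
        then show ?thesis by simp
      qed
      have p3: "?f v u w = sgnp ?E (F (B (B (a u) (a v)) (a w) # ?R))"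
      proof -
        have "even (pos U u + pos U v + Suc (pos (U-{v}-{u}) w) + ?E)" using r3 by presburger
        then show ?thesis using e1 by (simp only: sgnp_eq)
      qed
      have neg: "- F (B (B (a u) (a w)) (a v) # ?R) = F (B (B (a w) (a u)) (a v) # ?R)"
      proof -
        have "F (B (B (a w) (a u)) (a v) # ?R) + F (B (B (a u) (a w)) (a v) # ?R) = 0"
          using Fadd[OF len, of "B (B (a w) (a u)) (a v)" "B (B (a u) (a w)) (a v)"]
            F_zero[OF len] by (simp add: Badd1[symmetric] B_anti[of "a w" "a u"] B_minus1)
        then show ?thesis by (simp only: neg_eq_iff_add_eq_0 add.commute)
      qed
      have "F (B (B (a v) (a w)) (a u) # ?R) + - F (B (B (a u) (a w)) (a v) # ?R) + F (B (B (a u) (a v)) (a w) # ?R) = 0"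
        unfolding neg F_sum3[OF len]
        using Jac2[of "a u" "a v" "a w"] F_zero[OF len] by (simp add: algebra_simps)
      then have "sgnp ?E (F (B (B (a v) (a w)) (a u) # ?R)) + - sgnp ?E (F (B (B (a u) (a w)) (a v) # ?R)) + sgnp ?E (F (B (B (a u) (a v)) (a w) # ?R)) = 0"
      proof -
        have "sgnp ?E (F (B (B (a v) (a w)) (a u) # ?R) + - F (B (B (a u) (a w)) (a v) # ?R) + F (B (B (a u) (a v)) (a w) # ?R)) = 0"
          using \<open>F (B (B (a v) (a w)) (a u) # ?R) + - F (B (B (a u) (a w)) (a v) # ?R) + F (B (B (a u) (a v)) (a w) # ?R) = 0\<close>
          by (simp only: sgnp_zero)
        then show ?thesis by (simp only: sgnp_add sgnp_minus)
      qed
      moreover have "(u < v \<and> v < w) = True" using True by simp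
      ultimately show ?thesis by (simp only: if_True p1 p2 p3)
    next
      case False
      then have "(u < v \<and> v < w) = False" by simp
      then show ?thesis by (simp only: if_False add.right_neutral)
    qed
  qed
  show ?thesis using z by (simp only: t s2 s3 sum.distrib)
qed

end

lemma par4:
  fixes c1 c2 d1 d2 e1 e2 f1 f2 pu pv pw pz qu qv qz qw ru rv rz rw :: nat
  assumes "ru + c1 = qu" "qu + c2 = pu" "rv + d1 = qv" "qv + d2 = pv"
    "rz + e1 = qz" "qz + e2 = pz" "rw + f1 = qw" "qw + f2 = pw"
    "c1 + e1 = 1" "c2 + f1 = 1" "d1 + e2 = 1" "d2 + f2 = 1"
  shows "even (pz + pw + (ru + rv) + (pu + pv + (rz + rw)))"
proof -
  have a: "pz = rz + e1 + e2" "pw = rw + f1 + f2" "pu = ru + c1 + c2" "pv = rv + d1 + d2"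
    using assms by linarith+
  have "pz + pw + (ru + rv) + (pu + pv + (rz + rw)) =
     2 * (ru + rv + rz + rw) + (c1 + e1) + (c2 + f1) + (d1 + e2) + (d2 + f2)"
    unfolding a by (simp add: algebra_simps)
  also have "\<dots> = 2 * (ru + rv + rz + rw + 2)" using assms(9-12) by simp
  finally have eq: "pz + pw + (ru + rv) + (pu + pv + (rz + rw)) = 2 * (ru + rv + rz + rw + 2)" .
  show ?thesis by (subst eq) simp
qed

lemma card4: "finite U \<Longrightarrow> u \<in> U \<Longrightarrow> v \<in> U \<Longrightarrow> w \<in> U \<Longrightarrow> z \<in> U \<Longrightarrow> u \<noteq> v \<Longrightarrow> u \<noteq> w \<Longrightarrow> v \<noteq> w \<Longrightarrow>
  z \<noteq> u \<Longrightarrow> z \<noteq> v \<Longrightarrow> z \<noteq> w \<Longrightarrow> card (U - {w} - {z} - {v} - {u}) + 4 = card U"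
proof -
  assume a: "finite U" "u \<in> U" "v \<in> U" "w \<in> U" "z \<in> U" "u \<noteq> v" "u \<noteq> w" "v \<noteq> w" "z \<noteq> u" "z \<noteq> v" "z \<noteq> w"
  have "{u, v, w, z} \<subseteq> U" using a by auto
  then have "card {u, v, w, z} \<le> card U" using a(1) by (rule card_mono[rotated])
  moreover have "card {u, v, w, z} = 4" using a by simp
  moreover have "card (U - {w} - {z} - {v} - {u}) = card U - 1 - 1 - 1 - 1" using a by (simp add: card_Diff_singleton)
  ultimately show ?thesis by simp
qed

lemma sum_pairs: "(\<Sum>p\<in>U \<times> V. f p) = (\<Sum>x\<in>U. \<Sum>y\<in>V. f (x, y))"
  by (simp add: sum.cartesian_product)

context GT
begin

lemma partIV:
  assumes fin: "finite U" and cU: "card U = Suc (Suc n)"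
  shows "T2d a U = 0"
proof -
  define g where "g w z v u = (if z < w then if v \<noteq> w \<and> v \<noteq> z then if u \<noteq> w \<and> u \<noteq> z then if u < v then
     sgnp (pos U z + pos U w + (pos (U-{w}-{z}) u + pos (U-{w}-{z}) v)) (F (B (a u) (a v) # B (a z) (a w) # LL a (U-{w}-{z}-{v}-{u})))
     else 0 else 0 else 0 else 0)" for w z v u
  have t: "T2d a U = (\<Sum>w\<in>U. \<Sum>z\<in>U. \<Sum>v\<in>U. \<Sum>u\<in>U. g w z v u)"
    unfolding T2d_def g_def
    by (simp only: sum_diff2_if[OF fin] sgnp_sum sgnp_if sgnp_sg if_sum0)
  define G where "G p q = g (fst p) (snd p) (fst q) (snd q)" for p q
  have t2: "T2d a U = (\<Sum>p\<in>U \<times> U. \<Sum>q\<in>U \<times> U. G p q)"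
    unfolding t G_def sum_pairs by simp
  have anti: "G p q = - G q p" if pq: "p \<in> U \<times> U" "q \<in> U \<times> U" for p q
  proof -
    obtain w z where p: "p = (w, z)" "w \<in> U" "z \<in> U" using pq by auto
    obtain v u where q: "q = (v, u)" "v \<in> U" "u \<in> U" using pq by auto
    show ?thesis
    proof (cases "z < w \<and> u < v \<and> v \<noteq> w \<and> v \<noteq> z \<and> u \<noteq> w \<and> u \<noteq> z")
      case True
      then have ne: "z < w" "u < v" "v \<noteq> w" "v \<noteq> z" "u \<noteq> w" "u \<noteq> z" "z \<noteq> w" "u \<noteq> v" by auto
      have c1: "pos (U-{w}-{z}) u + (if z < u then 1 else 0) = pos (U-{w}) u" using pos_rem[of "U-{w}" z u] fin p q ne by simp
      have c2: "pos (U-{w}) u + (if w < u then 1 else 0) = pos U u" using pos_rem[of U w u] fin p q ne by simp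
      have d1: "pos (U-{w}-{z}) v + (if z < v then 1 else 0) = pos (U-{w}) v" using pos_rem[of "U-{w}" z v] fin p q ne by simp
      have d2: "pos (U-{w}) v + (if w < v then 1 else 0) = pos U v" using pos_rem[of U w v] fin p q ne by simp
      have e1: "pos (U-{v}-{u}) z + (if u < z then 1 else 0) = pos (U-{v}) z" using pos_rem[of "U-{v}" u z] fin p q ne by simp
      have e2: "pos (U-{v}) z + (if v < z then 1 else 0) = pos U z" using pos_rem[of U v z] fin p q ne by simp
      have f1: "pos (U-{v}-{u}) w + (if u < w then 1 else 0) = pos (U-{v}) w" using pos_rem[of "U-{v}" u w] fin p q ne by simp
      have f2: "pos (U-{v}) w + (if v < w then 1 else 0) = pos U w" using pos_rem[of U v w] fin p q ne by simp
      have k1: "(if z < u then 1 else 0) + (if u < z then 1 else (0::nat)) = 1" using ne by auto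
      have k2: "(if w < u then 1 else 0) + (if u < w then 1 else (0::nat)) = 1" using ne by auto
      have k3: "(if z < v then 1 else 0) + (if v < z then 1 else (0::nat)) = 1" using ne by auto
      have k4: "(if w < v then 1 else 0) + (if v < w then 1 else (0::nat)) = 1" using ne by auto
      have ev: "even (pos U z + pos U w + (pos (U-{w}-{z}) u + pos (U-{w}-{z}) v) +
          (pos U u + pos U v + (pos (U-{v}-{u}) z + pos (U-{v}-{u}) w)))"
        by (rule par4[OF c1 c2 d1 d2 e1 e2 f1 f2 k1 k2 k3 k4])
      let ?R = "LL a (U-{w}-{z}-{v}-{u})"
      have len: "Suc (Suc (length ?R)) = n"
        using card4[OF fin q(3) q(2) p(2) p(3)] ne cU LL_len[of "U-{w}-{z}-{v}-{u}" a] fin by simp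
      have se: "U-{v}-{u}-{w}-{z} = U-{w}-{z}-{v}-{u}" by blast
      have "G p q = sgnp (pos U z + pos U w + (pos (U-{w}-{z}) u + pos (U-{w}-{z}) v)) (F (B (a u) (a v) # B (a z) (a w) # ?R))"
        unfolding G_def g_def using p q True by simp
      moreover have "G q p = sgnp (pos U u + pos U v + (pos (U-{v}-{u}) z + pos (U-{v}-{u}) w)) (F (B (a z) (a w) # B (a u) (a v) # ?R))"
        unfolding G_def g_def using p q True se by simp
      moreover have "F (B (a z) (a w) # B (a u) (a v) # ?R) = - F (B (a u) (a v) # B (a z) (a w) # ?R)"
        by (rule Fanti[OF len])
      ultimately show ?thesis using sgnp_eq[OF ev] by (simp add: sgnp_minus)
    next
      case False
      then have "G p q = 0" "G q p = 0" unfolding G_def g_def using p q by auto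
      then show ?thesis by simp
    qed
  qed
  have "(\<Sum>p\<in>U \<times> U. \<Sum>q\<in>U \<times> U. G p q) = (\<Sum>q\<in>U \<times> U. \<Sum>p\<in>U \<times> U. G p q)" by (rule sum.swap)
  also have "\<dots> = (\<Sum>q\<in>U \<times> U. \<Sum>p\<in>U \<times> U. - G q p)"
  proof (intro sum.cong refl)
    fix q p assume "q \<in> U \<times> U" "p \<in> U \<times> U"
    then show "G p q = - G q p" by (rule anti[rotated])
  qed
  also have "\<dots> = - (\<Sum>p\<in>U \<times> U. \<Sum>q\<in>U \<times> U. G p q)" by (simp add: sum_negf)
  finally have "T2d a U + T2d a U = 0" unfolding t2 by (simp add: eq_neg_iff_add_eq_0)
  then show ?thesis by (rule half)
qed

end

lemma rearr6: "a + b + c + d + e + f = (a + c) + (b + d) + e + (f::'a::ab_group_add)"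
  by (simp add: ac_simps)

context GT begin
lemma GT_main:
  assumes "finite U" "card U = Suc (Suc n)"
  shows "dd B A (dd B A F) (LL a U) = 0"
proof -
  have "dd B A (dd B A F) (LL a U) = (T1a a U + T2a a U) + (T1b a U + T2b a U) + T2c a U + T2d a U"
    unfolding expand[OF assms(1)] by (rule rearr6)
  then show ?thesis using partI[OF assms(1)] partII[OF assms(1)] partIII[OF assms] partIV[OF assms] by simp
qed
end

lemma LL_nth: "LL (nth as) {..<length as} = as"
  unfolding LL_def by (simp add: lessThan_atLeast0 map_nth)

definition lieok :: "('g::ab_group_add \<Rightarrow> 'g \<Rightarrow> 'g) \<Rightarrow> ('g \<Rightarrow> 'm::ab_group_add \<Rightarrow> 'm) \<Rightarrow> bool" where
  "lieok B A \<longleftrightarrow> (\<forall>x y z. B (x + y) z = B x z + B y z) \<and> (\<forall>x y z. B z (x + y) = B z x + B z y) \<and>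
     (\<forall>x. B x x = 0) \<and> (\<forall>x y z. B x (B y z) + B y (B z x) + B z (B x y) = 0) \<and>
     (\<forall>x y m. A (x + y) m = A x m + A y m) \<and> (\<forall>x u v. A x (u + v) = A x u + A x v) \<and>
     (\<forall>x y m. A (B x y) m = A x (A y m) - A y (A x m))"

lemma GT_thm:
  fixes B :: "'g::ab_group_add \<Rightarrow> 'g \<Rightarrow> 'g" and A :: "'g \<Rightarrow> 'm::ab_group_add \<Rightarrow> 'm" and F :: "'g list \<Rightarrow> 'm"
  assumes "lieok B A"
    and "\<And>b c R. Suc (length R) = n \<Longrightarrow> F ((b + c) # R) = F (b # R) + F (c # R)"
    and "\<And>b c R. Suc (Suc (length R)) = n \<Longrightarrow> F (b # c # R) = - F (c # b # R)"
    and "\<And>x::'m::ab_group_add. x + x = 0 \<Longrightarrow> x = 0"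
    and "length as = n + 2"
  shows "dd B A (dd B A F) as = 0"
proof -
  have L: "\<forall>x y z. B (x + y) z = B x z + B y z" "\<forall>x y z. B z (x + y) = B z x + B z y"
     "\<forall>x. B x x = 0" "\<forall>x y z. B x (B y z) + B y (B z x) + B z (B x y) = 0"
     "\<forall>x y m. A (x + y) m = A x m + A y m" "\<forall>x u v. A x (u + v) = A x u + A x v"
     "\<forall>x y m. A (B x y) m = A x (A y m) - A y (A x m)"
    using assms(1) unfolding lieok_def by blast+
  interpret GT B A F n
    by (rule GT.intro) (fact L[rule_format] assms(2) assms(3) assms(4))+
  show ?thesis using GT_main[of "{..<length as}" "nth as"] assms(5) LL_nth[of as] by simp
qed

lemma dd_add_fun:
  assumes "\<And>c u v. A c (u + v) = A c u + A c v"
  shows "dd B A (\<lambda>ys. G ys + H ys) xs = dd B A G xs + dd B A H xs"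
  unfolding dd_def by (simp add: assms sgnp_add sum.distrib algebra_simps)

lemma dd_diff_fun:
  assumes "\<And>c u v. A c (u + v) = A c u + A c v"
  shows "dd B A (\<lambda>ys. G ys - H ys) xs = dd B A G xs - dd B A H xs"
proof -
  have m: "A c (- u) = - A c u" for c u by (rule hom_minus) (rule assms)
  have d: "A c (u - v) = A c u - A c v" for c u v
    using assms[of c u "- v"] m by simp
  show ?thesis unfolding dd_def by (simp add: d sgnp_diff sum_subtractf algebra_simps)
qed

lemma length_del_del: "i < j \<Longrightarrow> j < length xs \<Longrightarrow> length (del_at i (del_at j xs)) = length xs - 2"
  by (simp add: length_del_at)

lemma dd_split:
  assumes "\<And>b c R. Suc (Suc (length R)) = length xs \<Longrightarrow> G ((b + c) # R) = G (b # R) + G (c # R)"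
  shows "dd (\<lambda>u v. B1 u v + B2 u v) (\<lambda>c m. A1 c m + A2 c m) G xs = dd B1 A1 G xs + dd B2 A2 G xs"
proof -
  have "(\<Sum>j<length xs. \<Sum>i<j. sgnp (i + j) (G ((B1 (xs ! i) (xs ! j) + B2 (xs ! i) (xs ! j)) # del_at i (del_at j xs)))) =
     (\<Sum>j<length xs. \<Sum>i<j. sgnp (i + j) (G (B1 (xs ! i) (xs ! j) # del_at i (del_at j xs)))) +
     (\<Sum>j<length xs. \<Sum>i<j. sgnp (i + j) (G (B2 (xs ! i) (xs ! j) # del_at i (del_at j xs))))"
    unfolding sum.distrib[symmetric]
  proof (intro sum.cong refl)
    fix j i assume "j \<in> {..<length xs}" "i \<in> {..<j}"
    then have "Suc (Suc (length (del_at i (del_at j xs)))) = length xs" by (simp add: length_del_at)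
    then show "sgnp (i + j) (G ((B1 (xs ! i) (xs ! j) + B2 (xs ! i) (xs ! j)) # del_at i (del_at j xs))) =
      sgnp (i + j) (G (B1 (xs ! i) (xs ! j) # del_at i (del_at j xs))) + sgnp (i + j) (G (B2 (xs ! i) (xs ! j) # del_at i (del_at j xs)))"
      using assms by (simp add: sgnp_add)
  qed
  then show ?thesis unfolding dd_def by (simp add: sgnp_add sum.distrib algebra_simps)
qed

lemma dd_PM:
  assumes "\<And>u v. PM (u + v) = PM u + PM v"
  shows "dd B A (\<lambda>ys. PM (G ys)) xs = PM (dd B A G xs) -
     (\<Sum>i<length xs. sgnp i (PM (A (xs ! i) (G (del_at i xs))) - A (xs ! i) (PM (G (del_at i xs)))))"
proof -
  have m: "PM (- u) = - PM u" for u by (rule hom_minus) (rule assms)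
  have s: "PM (sgnp e u) = sgnp e (PM u)" for e u unfolding sgnp_def by (simp add: m)
  have h: "PM (sum g I) = (\<Sum>i\<in>I. PM (g i))" for g and I :: "'c set" by (rule hom_sum) (rule assms)
  show ?thesis unfolding dd_def by (simp add: assms h s sgnp_diff sum_subtractf algebra_simps)
qed

lemma rearr8: "(a1 + a2) + (b1 + b2) + (c1 + c2) + (d1 + d2) = (a1 + b1 + c1 + d1) + (a2 + b2 + c2 + (d2::'a::ab_group_add))"
  by (simp add: ac_simps)

lemma dd_slot0:
  assumes Badd1: "\<And>x y z. B (x + y) z = B x z + B y z"
    and Aadd1: "\<And>x y m. A (x + y) m = A x m + A y m"
    and Aadd2: "\<And>x u v. A x (u + v) = A x u + A x v"
    and G0: "\<And>b c R. Suc (length R) = k \<Longrightarrow> G ((b + c) # R) = G (b # R) + G (c # R)"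
    and G1: "\<And>a b c R. Suc (Suc (length R)) = k \<Longrightarrow> G (a # (b + c) # R) = G (a # b # R) + G (a # c # R)"
    and len: "length R = k"
  shows "dd B A G ((b + c) # R) = dd B A G (b # R) + dd B A G (c # R)"
proof -
  have 1: "(\<Sum>i<length R. sgnp (Suc i) (A (R ! i) (G ((b + c) # del_at i R)))) =
    (\<Sum>i<length R. sgnp (Suc i) (A (R ! i) (G (b # del_at i R)))) + (\<Sum>i<length R. sgnp (Suc i) (A (R ! i) (G (c # del_at i R))))"
    unfolding sum.distrib[symmetric]
  proof (intro sum.cong refl)
    fix i assume "i \<in> {..<length R}"
    then have "Suc (length (del_at i R)) = k" using len by (simp add: length_del_at)
    then show "sgnp (Suc i) (A (R ! i) (G ((b + c) # del_at i R))) =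
      sgnp (Suc i) (A (R ! i) (G (b # del_at i R))) + sgnp (Suc i) (A (R ! i) (G (c # del_at i R)))"
      by (simp only: G0 Aadd2 sgnp_add)
  qed
  have 2: "(\<Sum>i<length R. sgnp (Suc i) (G (B (b + c) (R ! i) # del_at i R))) =
    (\<Sum>i<length R. sgnp (Suc i) (G (B b (R ! i) # del_at i R))) + (\<Sum>i<length R. sgnp (Suc i) (G (B c (R ! i) # del_at i R)))"
    unfolding sum.distrib[symmetric]
  proof (intro sum.cong refl)
    fix i assume "i \<in> {..<length R}"
    then have "Suc (length (del_at i R)) = k" using len by (simp add: length_del_at)
    then show "sgnp (Suc i) (G (B (b + c) (R ! i) # del_at i R)) =
      sgnp (Suc i) (G (B b (R ! i) # del_at i R)) + sgnp (Suc i) (G (B c (R ! i) # del_at i R))"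
      by (simp only: G0 Badd1 sgnp_add)
  qed
  have 3: "(\<Sum>l<length R. \<Sum>i<l. sgnp (i + l) (G (B (R ! i) (R ! l) # (b + c) # del_at i (del_at l R)))) =
    (\<Sum>l<length R. \<Sum>i<l. sgnp (i + l) (G (B (R ! i) (R ! l) # b # del_at i (del_at l R)))) +
    (\<Sum>l<length R. \<Sum>i<l. sgnp (i + l) (G (B (R ! i) (R ! l) # c # del_at i (del_at l R))))"
    unfolding sum.distrib[symmetric]
  proof (intro sum.cong refl)
    fix l i assume "l \<in> {..<length R}" "i \<in> {..<l}"
    then have "Suc (Suc (length (del_at i (del_at l R)))) = k" using len by (simp add: length_del_at)
    then show "sgnp (i + l) (G (B (R ! i) (R ! l) # (b + c) # del_at i (del_at l R))) =
      sgnp (i + l) (G (B (R ! i) (R ! l) # b # del_at i (del_at l R))) + sgnp (i + l) (G (B (R ! i) (R ! l) # c # del_at i (del_at l R)))"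
      by (simp only: G1 sgnp_add)
  qed
  show ?thesis unfolding dd_cons 1 2 3 Aadd1 by (rule rearr8)
qed

lemma nij_lieok:
  fixes br :: "'g::ab_group_add \<Rightarrow> 'g \<Rightarrow> 'g" and act :: "'g \<Rightarrow> 'm::ab_group_add \<Rightarrow> 'm" and P :: "'g \<Rightarrow> 'g"
  assumes L: "lieok br act"
    and PA: "\<And>x y. P (x + y) = P x + P y"
    and Nij: "\<And>a b. br (P a) (P b) = P (nij_bracket br P a b)"
  shows "lieok (nij_bracket br P) (\<lambda>a. act (P a))"
proof -
  have bA1: "br (x + y) z = br x z + br y z" for x y z using L unfolding lieok_def by blast
  have bA2: "br z (x + y) = br z x + br z y" for x y z using L unfolding lieok_def by blast
  have bAlt: "br x x = 0" for x using L unfolding lieok_def by blast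
  have bJ: "br x (br y z) + br y (br z x) + br z (br x y) = 0" for x y z using L unfolding lieok_def by blast
  have aA1: "act (x + y) m = act x m + act y m" for x y m using L unfolding lieok_def by blast
  have aA2: "act x (u + v) = act x u + act x v" for x u v using L unfolding lieok_def by blast
  have aR: "act (br x y) m = act x (act y m) - act y (act x m)" for x y m using L unfolding lieok_def by blast
  have bm1: "br (- x) y = - br x y" for x y by (rule hom_minus[where h = "\<lambda>x. br x y"]) (rule bA1)
  have bm2: "br y (- x) = - br y x" for x y by (rule hom_minus[where h = "\<lambda>x. br y x"]) (rule bA2)
  have bd1: "br (x - z) y = br x y - br z y" for x y z by (simp only: diff_conv_add_uminus bA1 bm1)
  have bd2: "br y (x - z) = br y x - br y z" for x y z by (simp only: diff_conv_add_uminus bA2 bm2)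
  have Pm: "P (- x) = - P x" for x by (rule hom_minus) (rule PA)
  have Pd: "P (x - y) = P x - P y" for x y by (simp only: diff_conv_add_uminus PA Pm)
  have P0: "P 0 = 0" using PA[of 0 0] by simp
  have banti: "br x y = - br y x" for x y
  proof -
    have "br (x + y) (x + y) = br x x + br x y + (br y x + br y y)" by (simp add: bA1 bA2 add.assoc)
    then have "br x y + br y x = 0" by (simp add: bAlt)
    then show ?thesis by (simp add: eq_neg_iff_add_eq_0)
  qed
  let ?nb = "nij_bracket br P"
  have nbdef: "?nb a b = br (P a) b + br a (P b) - P (br a b)" for a b unfolding nij_bracket_def ..
  have nA1: "?nb (x + y) z = ?nb x z + ?nb y z" for x y z
    unfolding nbdef by (simp add: PA bA1 bA2 Pd algebra_simps)
  have nA2: "?nb z (x + y) = ?nb z x + ?nb z y" for x y z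
    unfolding nbdef by (simp add: PA bA1 bA2 Pd algebra_simps)
  have nAlt: "?nb x x = 0" for x
    unfolding nbdef using banti[of "P x" x] by (simp add: bAlt P0)
  have e: "?nb u (?nb v w) = br (P u) (br (P v) w) + br (P u) (br v (P w)) + br u (br (P v) (P w))
     - P (br (P u) (br v w)) - P (br u (br (P v) w)) - P (br u (br v (P w))) + P (P (br u (br v w)))" for u v w
  proof -
    have "?nb u (?nb v w) = br (P u) (?nb v w) + br u (P (?nb v w)) - P (br u (?nb v w))" by (rule nbdef)
    also have "P (?nb v w) = br (P v) (P w)" by (rule Nij[symmetric])
    also have "br (P u) (?nb v w) = br (P u) (br (P v) w) + br (P u) (br v (P w)) - br (P u) (P (br v w))"
      unfolding nbdef by (simp add: bA2 bd2)
    also have "br (P u) (P (br v w)) = P (br (P u) (br v w)) + P (br u (P (br v w))) - P (P (br u (br v w)))"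
      unfolding Nij nbdef by (simp add: PA Pd)
    also have "P (br u (?nb v w)) = P (br u (br (P v) w)) + P (br u (br v (P w))) - P (br u (P (br v w)))"
      unfolding nbdef by (simp add: bA2 bd2 PA Pd)
    finally show ?thesis by (simp add: algebra_simps)
  qed
  have nJ: "?nb x (?nb y z) + ?nb y (?nb z x) + ?nb z (?nb x y) = 0" for x y z
  proof -
    let ?J = "\<lambda>a b c. br a (br b c) + br b (br c a) + br c (br a b)"
    have "?nb x (?nb y z) + ?nb y (?nb z x) + ?nb z (?nb x y) =
       ?J (P x) (P y) z + ?J (P y) (P z) x + ?J (P z) (P x) y
       - P (?J (P x) y z + ?J (P y) z x + ?J (P z) x y) + P (P (?J x y z))"
      unfolding e by (simp add: PA Pd algebra_simps)
    also have "\<dots> = 0" by (simp only: bJ P0 add_0_left diff_self add_0_right)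
    finally show ?thesis .
  qed
  have pA1: "act (P (x + y)) m = act (P x) m + act (P y) m" for x y m by (simp add: PA aA1)
  have pR: "act (P (?nb x y)) m = act (P x) (act (P y) m) - act (P y) (act (P x) m)" for x y m
    unfolding Nij[symmetric] by (rule aR)
  show ?thesis unfolding lieok_def using nA1 nA2 nAlt nJ pA1 aA2 pR by blast
qed

lemma lin_add:
  assumes "Vector_Spaces.linear s1 s2 f"
  shows "f (x + y) = f x + f y"
proof -
  interpret Vector_Spaces.linear s1 s2 f by fact
  show ?thesis by (rule add)
qed

lemma dd_local:
  assumes "\<And>ys. Suc (length ys) = length xs \<Longrightarrow> G ys = H ys"
  shows "dd B A G xs = dd B A H xs"
proof -
  have 1: "(\<Sum>i<length xs. sgnp i (A (xs ! i) (G (del_at i xs)))) = (\<Sum>i<length xs. sgnp i (A (xs ! i) (H (del_at i xs))))"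
  proof (intro sum.cong refl)
    fix i assume "i \<in> {..<length xs}"
    then have "Suc (length (del_at i xs)) = length xs" by (simp add: length_del_at)
    then show "sgnp i (A (xs ! i) (G (del_at i xs))) = sgnp i (A (xs ! i) (H (del_at i xs)))" using assms by simp
  qed
  have 2: "(\<Sum>j<length xs. \<Sum>i<j. sgnp (i + j) (G (B (xs ! i) (xs ! j) # del_at i (del_at j xs)))) =
     (\<Sum>j<length xs. \<Sum>i<j. sgnp (i + j) (H (B (xs ! i) (xs ! j) # del_at i (del_at j xs))))"
  proof (intro sum.cong refl)
    fix j i assume "j \<in> {..<length xs}" "i \<in> {..<j}"
    then have "Suc (length (B (xs ! i) (xs ! j) # del_at i (del_at j xs))) = length xs" by (simp add: length_del_at)
    then show "sgnp (i + j) (G (B (xs ! i) (xs ! j) # del_at i (del_at j xs))) = sgnp (i + j) (H (B (xs ! i) (xs ! j) # del_at i (del_at j xs)))"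
      using assms by simp
  qed
  show ?thesis unfolding dd_def 1 2 ..
qed

lemma grp1: "x + y = z + w \<Longrightarrow> w - y = x - (z::'a::ab_group_add)"
proof -
  assume h: "x + y = z + w"
  have "w - y = (z + w) - y - z" by simp
  also have "\<dots> = (x + y) - y - z" using h by simp
  finally show ?thesis by simp
qed

theorem lemma6p2:
  fixes sg :: "'k::field_char_0 \<Rightarrow> 'g::ab_group_add \<Rightarrow> 'g"
    and sm :: "'k \<Rightarrow> 'm::ab_group_add \<Rightarrow> 'm"
    and br :: "'g \<Rightarrow> 'g \<Rightarrow> 'g" and P :: "'g \<Rightarrow> 'g"
    and act :: "'g \<Rightarrow> 'm \<Rightarrow> 'm" and PM :: "'m \<Rightarrow> 'm"
    and f :: "'g list \<Rightarrow> 'm" and n :: nat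
  assumes "nijenhuis_lie_algebra sg br P"
    and "nijenhuis_rep sg br P sm act PM"
    and "cochain sg sm n f"
    and "length as = n + 2"
  shows "njo_diff sm br P act PM (njo_diff sm br P act PM f) as = 0"
proof -
  from assms(1) have LA: "lie_algebra sg br" and linP: "Vector_Spaces.linear sg sg P"
    and Nij: "\<And>a b. br (P a) (P b) = P (nij_bracket br P a b)"
    unfolding nijenhuis_lie_algebra_def by auto
  from assms(2) have LR: "lie_rep sg br sm act" and linPM: "Vector_Spaces.linear sm sm PM"
    and NR: "\<And>a x. act (P a) (PM x) = PM (act (P a) x + act a (PM x) - PM (act a x))"
    unfolding nijenhuis_rep_def by auto
  from LA have bil: "bilinear_map sg sg sg br" and alt: "\<And>a. br a a = 0"
    and jac: "\<And>a b c. br a (br b c) + br b (br c a) + br c (br a b) = 0"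
    unfolding lie_algebra_def by auto
  from LR have VSm: "vector_space sm" and bilA: "bilinear_map sg sm sm act"
    and rep: "\<And>a b x. act (br a b) x = act a (act b x) - act b (act a x)"
    unfolding lie_rep_def by auto
  have bA1: "br (x + y) z = br x z + br y z" for x y z
  proof -
    have "Vector_Spaces.linear sg sg (\<lambda>a. br a z)" using bil unfolding bilinear_map_def by blast
    from lin_add[OF this, of x y] show ?thesis by simp
  qed
  have bA2: "br z (x + y) = br z x + br z y" for x y z
  proof -
    have "Vector_Spaces.linear sg sg (\<lambda>b. br z b)" using bil unfolding bilinear_map_def by blast
    from lin_add[OF this, of x y] show ?thesis by simp
  qed
  have aA1: "act (x + y) m = act x m + act y m" for x y m
  proof -
    have "Vector_Spaces.linear sg sm (\<lambda>a. act a m)" using bilA unfolding bilinear_map_def by blast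
    from lin_add[OF this, of x y] show ?thesis by simp
  qed
  have aA2: "act x (u + v) = act x u + act x v" for x u v
  proof -
    have "Vector_Spaces.linear sm sm (\<lambda>b. act x b)" using bilA unfolding bilinear_map_def by blast
    from lin_add[OF this, of u v] show ?thesis by simp
  qed
  have PA: "P (x + y) = P x + P y" for x y using linP by (rule lin_add)
  have PMA: "PM (u + v) = PM u + PM v" for u v using linPM by (rule lin_add)
  have PMm: "PM (- u) = - PM u" for u by (rule hom_minus) (rule PMA)
  have PMd: "PM (u - v) = PM u - PM v" for u v by (simp only: diff_conv_add_uminus PMA PMm)
  have PM0: "PM 0 = 0" using PMA[of 0 0] by simp
  have Pm: "P (- u) = - P u" for u by (rule hom_minus) (rule PA)
  have Pd: "P (u - v) = P u - P v" for u v by (simp only: diff_conv_add_uminus PA Pm)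
  have bm1: "br (- x) y = - br x y" for x y by (rule hom_minus[where h = "\<lambda>x. br x y"]) (rule bA1)
  have bm2: "br y (- x) = - br y x" for x y by (rule hom_minus[where h = "\<lambda>x. br y x"]) (rule bA2)
  have bd1: "br (x - z) y = br x y - br z y" for x y z by (simp only: diff_conv_add_uminus bA1 bm1)
  have bd2: "br y (x - z) = br y x - br y z" for x y z by (simp only: diff_conv_add_uminus bA2 bm2)
  have Lok: "lieok br act" unfolding lieok_def using bA1 bA2 alt jac aA1 aA2 rep by blast
  from assms(3) have clin: "\<And>bs i. length bs = n \<Longrightarrow> i < n \<Longrightarrow> Vector_Spaces.linear sg sm (\<lambda>x. f (bs[i := x]))"
    and calt: "\<And>bs i j. length bs = n \<Longrightarrow> i < j \<Longrightarrow> j < n \<Longrightarrow> bs ! i = bs ! j \<Longrightarrow> f bs = 0"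
    unfolding cochain_def by blast+
  have f0: "f ((b + c) # R) = f (b # R) + f (c # R)" if "Suc (length R) = n" for b c R
    using lin_add[OF clin[of "b # R" 0], of b c] that by simp
  have f1: "f (a0 # (b + c) # R) = f (a0 # b # R) + f (a0 # c # R)" if "Suc (Suc (length R)) = n" for a0 b c R
    using lin_add[OF clin[of "a0 # b # R" 1], of b c] that by simp
  have fanti: "f (b # c # R) = - f (c # b # R)" if l: "Suc (Suc (length R)) = n" for b c R
  proof -
    have z: "f (x # x # R) = 0" for x by (rule calt[of _ 0 1]) (use l in auto)
    have "f ((b + c) # (b + c) # R) = f (b # b # R) + f (b # c # R) + (f (c # b # R) + f (c # c # R))"
      using l by (simp add: f0 f1 add.assoc)
    then have "f (b # c # R) + f (c # b # R) = 0" using z by simp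
    then show ?thesis by (simp add: eq_neg_iff_add_eq_0)
  qed
  have half: "x = 0" if "x + x = 0" for x :: 'm
  proof -
    interpret vector_space sm by (rule VSm)
    have "x = sm (1/2 + 1/2) x" by simp
    also have "\<dots> = sm (1/2) (x + x)" by (simp only: scale_left_distrib scale_right_distrib)
    finally show ?thesis using that by simp
  qed
  let ?nb = "nij_bracket br P"
  let ?AP = "\<lambda>a x. act (P a) x"
  have PAd: "\<And>c u v. ?AP c (u + v) = ?AP c u + ?AP c v" by (simp add: aA2)
  have aA2': "\<And>c u v. act c (u + v) = act c u + act c v" by (rule aA2)
  have njo_eq: "njo_diff sm br P act PM G xs = dd ?nb ?AP G xs - PM (dd br act G xs)" for G xs
    unfolding njo_diff_def ce_diff_dd[OF VSm] ..
  define Df where "Df = (\<lambda>ys. dd ?nb ?AP f ys - PM (dd br act f ys))"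
  have nf: "njo_diff sm br P act PM f = Df" unfolding Df_def by (rule ext) (rule njo_eq)
  let ?X1 = "dd ?nb ?AP (dd ?nb ?AP f) as"
  let ?X2 = "dd ?nb ?AP (dd br act f) as"
  let ?X3 = "dd br act (dd ?nb ?AP f) as"
  let ?X4 = "dd br act (dd br act f) as"
  let ?E1 = "\<Sum>i<length as. sgnp i (PM (?AP (as ! i) (dd br act f (del_at i as))) - ?AP (as ! i) (PM (dd br act f (del_at i as))))"
  let ?E2 = "\<Sum>i<length as. sgnp i (PM (act (as ! i) (dd br act f (del_at i as))) - act (as ! i) (PM (dd br act f (del_at i as))))"
  have e1: "dd ?nb ?AP Df as = ?X1 - (PM ?X2 - ?E1)"
    unfolding Df_def dd_diff_fun[of ?AP, OF PAd] dd_PM[OF PMA] ..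
  have e2: "dd br act Df as = ?X3 - (PM ?X4 - ?E2)"
    unfolding Df_def dd_diff_fun[of act, OF aA2'] dd_PM[OF PMA] ..
  have Lnb: "lieok ?nb ?AP" by (rule nij_lieok[OF Lok PA Nij])
  have X1: "?X1 = 0" by (rule GT_thm[OF Lnb f0 fanti half assms(4)])
  have X4: "?X4 = 0" by (rule GT_thm[OF Lok f0 fanti half assms(4)])
  have X23: "?X2 + ?X3 = 0"
  proof -
    define P' where "P' = (\<lambda>a. P a + a)"
    have PA': "P' (x + y) = P' x + P' y" for x y unfolding P'_def by (simp add: PA algebra_simps)
    have nbP': "nij_bracket br P' u v = ?nb u v + br u v" for u v
      unfolding P'_def nij_bracket_def by (simp add: bA1 bA2 PA algebra_simps)
    have Nij': "br (P' a) (P' b) = P' (nij_bracket br P' a b)" for a b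
    proof -
      have "br (P' a) (P' b) = br (P a) (P b) + br (P a) b + br a (P b) + br a b"
        unfolding P'_def by (simp add: bA1 bA2 algebra_simps)
      also have "\<dots> = P (?nb a b) + P (br a b) + ?nb a b + br a b"
        unfolding Nij by (simp add: nij_bracket_def PA Pd algebra_simps)
      also have "\<dots> = P' (nij_bracket br P' a b)" unfolding nbP' unfolding P'_def by (simp add: PA algebra_simps)
      finally show ?thesis .
    qed
    have L': "lieok (nij_bracket br P') (\<lambda>a x. act (P' a) x)" by (rule nij_lieok[OF Lok PA' Nij'])
    have Z: "dd (nij_bracket br P') (\<lambda>a x. act (P' a) x) (dd (nij_bracket br P') (\<lambda>a x. act (P' a) x) f) as = 0"
      by (rule GT_thm[OF L' f0 fanti half assms(4)])
    have eqB: "nij_bracket br P' = (\<lambda>u v. ?nb u v + br u v)" by (intro ext) (rule nbP')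
    have eqA: "(\<lambda>a x. act (P' a) x) = (\<lambda>c m. ?AP c m + act c m)" unfolding P'_def by (intro ext) (simp add: aA1)
    have nbA1: "?nb (x + y) z = ?nb x z + ?nb y z" for x y z
      unfolding nij_bracket_def by (simp add: PA bA1 bA2 Pd algebra_simps)
    have APA1: "?AP (x + y) m = ?AP x m + ?AP y m" for x y m by (simp add: PA aA1)
    have inner: "dd (\<lambda>u v. ?nb u v + br u v) (\<lambda>c m. ?AP c m + act c m) f ys = dd ?nb ?AP f ys + dd br act f ys"
      if "Suc (length ys) = length as" for ys
    proof (rule dd_split)
      fix b c :: 'g and R :: "'g list" assume "Suc (Suc (length R)) = length ys"
      then have "Suc (length R) = n" using that assms(4) by simp
      then show "f ((b + c) # R) = f (b # R) + f (c # R)" by (rule f0)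
    qed
    have slot: "(dd ?nb ?AP f ((b + c) # R) + dd br act f ((b + c) # R)) =
       (dd ?nb ?AP f (b # R) + dd br act f (b # R)) + (dd ?nb ?AP f (c # R) + dd br act f (c # R))"
      if "length R = n" for b c R
    proof -
      have "dd ?nb ?AP f ((b + c) # R) = dd ?nb ?AP f (b # R) + dd ?nb ?AP f (c # R)"
        by (rule dd_slot0[OF nbA1 APA1 PAd f0 f1 that])
      moreover have "dd br act f ((b + c) # R) = dd br act f (b # R) + dd br act f (c # R)"
        by (rule dd_slot0[OF bA1 aA1 aA2 f0 f1 that])
      ultimately show ?thesis by (simp add: algebra_simps)
    qed
    have "0 = dd (\<lambda>u v. ?nb u v + br u v) (\<lambda>c m. ?AP c m + act c m) (dd (\<lambda>u v. ?nb u v + br u v) (\<lambda>c m. ?AP c m + act c m) f) as"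
      using Z unfolding eqB eqA by simp
    also have "\<dots> = dd (\<lambda>u v. ?nb u v + br u v) (\<lambda>c m. ?AP c m + act c m) (\<lambda>ys. dd ?nb ?AP f ys + dd br act f ys) as"
      by (rule dd_local) (rule inner)
    also have "\<dots> = dd ?nb ?AP (\<lambda>ys. dd ?nb ?AP f ys + dd br act f ys) as + dd br act (\<lambda>ys. dd ?nb ?AP f ys + dd br act f ys) as"
    proof (rule dd_split)
      fix b c :: 'g and R :: "'g list" assume "Suc (Suc (length R)) = length as"
      then have "length R = n" using assms(4) by simp
      then show "dd ?nb ?AP f ((b + c) # R) + dd br act f ((b + c) # R) =
        (dd ?nb ?AP f (b # R) + dd br act f (b # R)) + (dd ?nb ?AP f (c # R) + dd br act f (c # R))"
        by (rule slot)
    qed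
    also have "\<dots> = ?X1 + ?X2 + (?X3 + ?X4)"
      unfolding dd_add_fun[of ?AP, OF PAd] dd_add_fun[of act, OF aA2'] ..
    finally show ?thesis using X1 X4 by simp
  qed
  have E12: "?E1 = PM ?E2"
  proof -
    have Ps: "PM (sgnp e u) = sgnp e (PM u)" for e u unfolding sgnp_def by (simp add: PMm)
    have Psum: "PM (sum g I) = (\<Sum>i\<in>I. PM (g i))" for g and I :: "nat set" by (rule hom_sum) (rule PMA)
    show ?thesis unfolding Psum Ps PMd
    proof (intro sum.cong refl)
      fix i
      let ?g = "dd br act f (del_at i as)" and ?a = "as ! i"
      have "act (P ?a) (PM ?g) = PM (act (P ?a) ?g) + PM (act ?a (PM ?g)) - PM (PM (act ?a ?g))"
        by (simp only: NR PMA PMd)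
      then have "PM (PM (act ?a ?g)) + act (P ?a) (PM ?g) = PM (act ?a (PM ?g)) + PM (act (P ?a) ?g)"
        by (simp add: algebra_simps)
      then show "sgnp i (PM (act (P ?a) ?g) - act (P ?a) (PM ?g)) = sgnp i (PM (PM (act ?a ?g)) - PM (act ?a (PM ?g)))"
        by (simp only: grp1)
    qed
  qed
  show ?thesis unfolding nf njo_eq e1 e2 X1 X4
  proof -
    have "0 - (PM ?X2 - ?E1) - PM (?X3 - (PM 0 - ?E2)) = - PM (?X2 + ?X3) + (?E1 - PM ?E2)"
      by (simp add: PMA PMd PM0 PMm algebra_simps)
    also have "\<dots> = 0" using X23 E12 by (simp add: PM0)
    finally show "0 - (PM ?X2 - ?E1) - PM (?X3 - (PM 0 - ?E2)) = 0" .
  qed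
qed

end
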